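(* Let $N\ge1$, $s\in(0,1)$, $p\in[1,\infty)$. Let $\mathring{B}^s_{p,\infty}(\mathbb{R}^N)$, resp. $\mathring{N}^{s,p}(\mathbb{R}^N)$, denote the closure of $C^\infty_c(\mathbb{R}^N)$ in $B^s_{p,\infty}(\mathbb{R}^N)$, resp. in $N^{s,p}(\mathbb{R}^N)$. Then $f\in\mathring{N}^{s,p}(\mathbb{R}^N)$ if and only if $f\in\mathring{B}^s_{p,\infty}(\mathbb{R}^N)$.
   Context: $B^s_{p,\infty}(\mathbb{R}^N)$ is the set of $f\in L^p$ with $[f]_{B^s_{p,\infty}}:=\sup_{h\ne0}|h|^{-s}\|f(\cdot+h)-f\|_{L^p}<\infty$, normed by $\|f\|_{L^p}+[f]_{B^s_{p,\infty}}$. $N^{s,p}(\mathbb{R}^N)$ is the same set of functions endowed with the norm $\|f\|_{L^p}+[f]_{N^{s,p}}$, where $[f]_{N^{s,p}}:=\limsup_{|h|\to0}|h|^{-s}\|f(\cdot+h)-f\|_{L^p}$. *)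

theory Defs
  imports "HOL-Analysis.Analysis" "HOL-Library.Liminf_Limsup"
begin

inductive_set iter_derivs :: "('a::euclidean_space \<Rightarrow> real) \<Rightarrow> ('a \<Rightarrow> real) set"
  for g :: "'a \<Rightarrow> real" where
  base: "g \<in> iter_derivs g"
| step: "h \<in> iter_derivs g \<Longrightarrow> h differentiable_on UNIV \<Longrightarrow>
         (\<lambda>x. frechet_derivative h (at x) v) \<in> iter_derivs g"

definition smooth_fun :: "('a::euclidean_space \<Rightarrow> real) \<Rightarrow> bool" where
  "smooth_fun g \<longleftrightarrow> (\<forall>h\<in>iter_derivs g. h differentiable_on UNIV)"

definition Cc_inf :: "('a::euclidean_space \<Rightarrow> real) set" where
  "Cc_inf = {g. smooth_fun g \<and> compact (closure {x. g x \<noteq> 0})}"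

definition in_Lp :: "real \<Rightarrow> ('a::euclidean_space \<Rightarrow> real) \<Rightarrow> bool" where
  "in_Lp p f \<longleftrightarrow> f \<in> borel_measurable lebesgue \<and> integrable lebesgue (\<lambda>x. \<bar>f x\<bar> powr p)"

definition Lp_norm :: "real \<Rightarrow> ('a::euclidean_space \<Rightarrow> real) \<Rightarrow> real" where
  "Lp_norm p f = (LINT x|lebesgue. \<bar>f x\<bar> powr p) powr (1 / p)"

definition besov_semi :: "real \<Rightarrow> real \<Rightarrow> ('a::euclidean_space \<Rightarrow> real) \<Rightarrow> ereal" where
  "besov_semi s p f = (SUP h\<in>-{0}. ereal (norm h powr (-s) * Lp_norm p (\<lambda>x. f (x + h) - f x)))"

definition nikolskii_semi :: "real \<Rightarrow> real \<Rightarrow> ('a::euclidean_space \<Rightarrow> real) \<Rightarrow> ereal" where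
  "nikolskii_semi s p f = Limsup (at 0) (\<lambda>h. ereal (norm h powr (-s) * Lp_norm p (\<lambda>x. f (x + h) - f x)))"

text \<open>The common underlying set of B^s_{p,\<infinity>} and N^{s,p}.\<close>
definition besov_space :: "real \<Rightarrow> real \<Rightarrow> ('a::euclidean_space \<Rightarrow> real) set" where
  "besov_space s p = {f. in_Lp p f \<and> besov_semi s p f < \<infinity>}"

definition besov_norm :: "real \<Rightarrow> real \<Rightarrow> ('a::euclidean_space \<Rightarrow> real) \<Rightarrow> ereal" where
  "besov_norm s p f = ereal (Lp_norm p f) + besov_semi s p f"

definition nikolskii_norm :: "real \<Rightarrow> real \<Rightarrow> ('a::euclidean_space \<Rightarrow> real) \<Rightarrow> ereal" where
  "nikolskii_norm s p f = ereal (Lp_norm p f) + nikolskii_semi s p f"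

definition besov_zero :: "real \<Rightarrow> real \<Rightarrow> ('a::euclidean_space \<Rightarrow> real) set" where
  "besov_zero s p = {f \<in> besov_space s p.
     \<forall>\<epsilon>>0. \<exists>g\<in>Cc_inf. besov_norm s p (\<lambda>x. f x - g x) < ereal \<epsilon>}"

definition nikolskii_zero :: "real \<Rightarrow> real \<Rightarrow> ('a::euclidean_space \<Rightarrow> real) set" where
  "nikolskii_zero s p = {f \<in> besov_space s p.
     \<forall>\<epsilon>>0. \<exists>g\<in>Cc_inf. nikolskii_norm s p (\<lambda>x. f x - g x) < ereal \<epsilon>}"

end

theory Submission
  imports Defs
begin

lemma tangent_powr:
  fixes p a z :: real
  assumes p: "1 \<le> p" and a: "0 \<le> a" and z: "0 \<le> z"
  shows "a powr p + p * a powr (p - 1) * (z - a) \<le> z powr p"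
proof (cases "a = 0")
  case True thus ?thesis using p by simp
next
  case False
  hence a0: "0 < a" using a by simp
  show ?thesis
  proof (cases "z = 0")
    case True
    have "a powr p + p * a powr (p - 1) * (z - a) = (1 - p) * a powr p"
      using a0 True by (simp add: powr_diff algebra_simps)
    also have "\<dots> \<le> 0" using p by (simp add: mult_nonpos_nonneg)
    finally show ?thesis using True by simp
  next
    case False
    hence z0: "0 < z" using z by simp
    have der: "\<And>x. 0 < x \<Longrightarrow> ((\<lambda>x. x powr p) has_real_derivative p * x powr (p - 1)) (at x)"
      by (auto intro!: derivative_eq_intros)
    show ?thesis
    proof (cases "a \<le> z")
      case True
      show ?thesis
      proof (cases "a = z")
        case True thus ?thesis by simp
      next
        case False
        with \<open>a \<le> z\<close> have "a < z" by simp
        obtain \<xi> where xi: "a < \<xi>" "\<xi> < z" "z powr p - a powr p = (z - a) * (p * \<xi> powr (p - 1))"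
          using MVT2[OF \<open>a < z\<close>, of "\<lambda>x. x powr p" "\<lambda>x. p * x powr (p - 1)"] der a0 by force
        have "a powr (p - 1) \<le> \<xi> powr (p - 1)" using xi a0 p by (intro powr_mono2) auto
        hence "p * a powr (p - 1) \<le> p * \<xi> powr (p - 1)" using p by simp
        hence "p * a powr (p - 1) * (z - a) \<le> p * \<xi> powr (p - 1) * (z - a)"
          using \<open>a < z\<close> by (intro mult_right_mono) auto
        hence "p * a powr (p - 1) * (z - a) \<le> (z - a) * (p * \<xi> powr (p - 1))"
          by (simp add: algebra_simps)
        thus ?thesis using xi by linarith
      qed
    next
      case False
      hence "z < a" by simp
      obtain \<xi> where xi: "z < \<xi>" "\<xi> < a" "a powr p - z powr p = (a - z) * (p * \<xi> powr (p - 1))"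
        using MVT2[OF \<open>z < a\<close>, of "\<lambda>x. x powr p" "\<lambda>x. p * x powr (p - 1)"] der z0 by force
      have "\<xi> powr (p - 1) \<le> a powr (p - 1)" using xi z0 p by (intro powr_mono2) auto
      hence "p * \<xi> powr (p - 1) \<le> p * a powr (p - 1)" using p by simp
      hence "p * \<xi> powr (p - 1) * (a - z) \<le> p * a powr (p - 1) * (a - z)"
        using \<open>z < a\<close> by (intro mult_right_mono) auto
      hence "(a - z) * (p * \<xi> powr (p - 1)) \<le> p * a powr (p - 1) * (a - z)"
        by (simp add: algebra_simps)
      thus ?thesis using xi by (simp add: algebra_simps)
    qed
  qed
qed

lemma convex_powr_ineq:
  fixes p x y l :: real
  assumes p: "1 \<le> p" and "0 \<le> x" "0 \<le> y" "0 \<le> l" "l \<le> 1"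
  shows "(l * x + (1 - l) * y) powr p \<le> l * x powr p + (1 - l) * y powr p"
proof -
  define m where "m = l * x + (1 - l) * y"
  have m: "0 \<le> m" using assms by (simp add: m_def)
  have 1: "m powr p + p * m powr (p - 1) * (x - m) \<le> x powr p" by (rule tangent_powr) (use assms m in auto)
  have 2: "m powr p + p * m powr (p - 1) * (y - m) \<le> y powr p" by (rule tangent_powr) (use assms m in auto)
  have "l * (m powr p + p * m powr (p - 1) * (x - m)) + (1 - l) * (m powr p + p * m powr (p - 1) * (y - m))
        \<le> l * x powr p + (1 - l) * y powr p"
    using 1 2 assms by (intro add_mono mult_left_mono) auto
  moreover have "l * (m powr p + p * m powr (p - 1) * (x - m)) + (1 - l) * (m powr p + p * m powr (p - 1) * (y - m))
        = m powr p"
    by (simp add: m_def algebra_simps)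
  ultimately show ?thesis by (simp add: m_def)
qed

lemma powr_sum_le:
  fixes p x y :: real
  assumes p: "1 \<le> p" and "0 \<le> x" "0 \<le> y"
  shows "(x + y) powr p \<le> 2 powr (p - 1) * (x powr p + y powr p)"
proof -
  have "((1/2) * x + (1 - 1/2) * y) powr p \<le> (1/2) * x powr p + (1 - 1/2) * y powr p"
    by (rule convex_powr_ineq) (use assms in auto)
  hence "((x + y) / 2) powr p \<le> (x powr p + y powr p) / 2" by (simp add: field_simps)
  hence "(x + y) powr p / 2 powr p \<le> (x powr p + y powr p) / 2"
    using assms by (simp add: powr_divide)
  hence "(x + y) powr p \<le> 2 powr p * ((x powr p + y powr p) / 2)"
    by (simp add: field_simps)
  also have "2 powr p * ((x powr p + y powr p) / 2) = 2 powr (p - 1) * (x powr p + y powr p)"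
    by (simp add: powr_diff field_simps)
  finally show ?thesis .
qed

lemma integrable_powr_add:
  fixes u v :: "'b \<Rightarrow> real"
  assumes p: "1 \<le> p" and [measurable]: "u \<in> borel_measurable M" "v \<in> borel_measurable M"
    and iu: "integrable M (\<lambda>x. \<bar>u x\<bar> powr p)" and iv: "integrable M (\<lambda>x. \<bar>v x\<bar> powr p)"
  shows "integrable M (\<lambda>x. \<bar>u x + v x\<bar> powr p)"
proof (rule Bochner_Integration.integrable_bound)
  show "integrable M (\<lambda>x. 2 powr (p - 1) * (\<bar>u x\<bar> powr p + \<bar>v x\<bar> powr p))"
    using iu iv by auto
  show "(\<lambda>x. \<bar>u x + v x\<bar> powr p) \<in> borel_measurable M" by measurable
  show "AE x in M. norm (\<bar>u x + v x\<bar> powr p) \<le> norm (2 powr (p - 1) * (\<bar>u x\<bar> powr p + \<bar>v x\<bar> powr p))"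
  proof (intro AE_I2)
    fix x
    have "\<bar>u x + v x\<bar> powr p \<le> (\<bar>u x\<bar> + \<bar>v x\<bar>) powr p"
      using p by (intro powr_mono2) auto
    also have "\<dots> \<le> 2 powr (p - 1) * (\<bar>u x\<bar> powr p + \<bar>v x\<bar> powr p)"
      using p by (intro powr_sum_le) auto
    finally show "norm (\<bar>u x + v x\<bar> powr p) \<le> norm (2 powr (p - 1) * (\<bar>u x\<bar> powr p + \<bar>v x\<bar> powr p))"
      by simp
  qed
qed

lemma AE_zero_of_powr_integral:
  fixes u :: "'b \<Rightarrow> real"
  assumes p: "1 \<le> p" and [measurable]: "u \<in> borel_measurable M"
    and iu: "integrable M (\<lambda>x. \<bar>u x\<bar> powr p)" and z: "(\<integral>x. \<bar>u x\<bar> powr p \<partial>M) = 0"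
  shows "AE x in M. u x = 0"
proof -
  have "AE x in M. \<bar>u x\<bar> powr p = 0"
    using integral_nonneg_eq_0_iff_AE[OF iu] z by auto
  thus ?thesis by eventually_elim auto
qed

lemma minkowski:
  fixes u v :: "'b \<Rightarrow> real"
  assumes p: "1 \<le> p" and [measurable]: "u \<in> borel_measurable M" "v \<in> borel_measurable M"
    and iu: "integrable M (\<lambda>x. \<bar>u x\<bar> powr p)" and iv: "integrable M (\<lambda>x. \<bar>v x\<bar> powr p)"
  shows "(\<integral>x. \<bar>u x + v x\<bar> powr p \<partial>M) powr (1/p)
     \<le> (\<integral>x. \<bar>u x\<bar> powr p \<partial>M) powr (1/p) + (\<integral>x. \<bar>v x\<bar> powr p \<partial>M) powr (1/p)"
proof -
  define Iu where "Iu = (\<integral>x. \<bar>u x\<bar> powr p \<partial>M)"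
  define Iv where "Iv = (\<integral>x. \<bar>v x\<bar> powr p \<partial>M)"
  define a where "a = Iu powr (1/p)"
  define b where "b = Iv powr (1/p)"
  have Iu0: "0 \<le> Iu" unfolding Iu_def by auto
  have Iv0: "0 \<le> Iv" unfolding Iv_def by auto
  have iuv: "integrable M (\<lambda>x. \<bar>u x + v x\<bar> powr p)" by (rule integrable_powr_add) (use assms in auto)
  show ?thesis
  proof (cases "Iu = 0")
    case True
    have "AE x in M. u x = 0" using AE_zero_of_powr_integral[OF p _ iu] True Iu_def by auto
    hence "(\<integral>x. \<bar>u x + v x\<bar> powr p \<partial>M) = Iv" unfolding Iv_def
      by (intro integral_cong_AE) auto
    thus ?thesis using True by (simp add: Iu_def[symmetric] Iv_def[symmetric])
  next
    case Fu: False
    show ?thesis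
    proof (cases "Iv = 0")
      case True
      have "AE x in M. v x = 0" using AE_zero_of_powr_integral[OF p _ iv] True Iv_def by auto
      hence "(\<integral>x. \<bar>u x + v x\<bar> powr p \<partial>M) = Iu" unfolding Iu_def
        by (intro integral_cong_AE) auto
      thus ?thesis using True by (simp add: Iu_def[symmetric] Iv_def[symmetric])
    next
      case Fv: False
      have a0: "0 < a" using Fu Iu0 by (simp add: a_def)
      have b0: "0 < b" using Fv Iv0 by (simp add: b_def)
      have apow: "a powr p = Iu" using Iu0 p by (simp add: a_def powr_powr)
      have bpow: "b powr p = Iv" using Iv0 p by (simp add: b_def powr_powr)
      define S where "S = a + b"
      have S0: "0 < S" using a0 b0 by (simp add: S_def)
      have pt: "\<bar>u x + v x\<bar> powr p \<le>
          (a / S) * (S / a) powr p * \<bar>u x\<bar> powr p + (b / S) * (S / b) powr p * \<bar>v x\<bar> powr p" for x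
      proof -
        have "\<bar>u x + v x\<bar> powr p \<le> (\<bar>u x\<bar> + \<bar>v x\<bar>) powr p"
          using p by (intro powr_mono2) auto
        also have "\<bar>u x\<bar> + \<bar>v x\<bar> = (a / S) * (S / a * \<bar>u x\<bar>) + (1 - a / S) * (S / b * \<bar>v x\<bar>)"
        proof -
          have "1 - a / S = b / S" using S0 by (simp add: S_def field_simps)
          thus ?thesis using a0 b0 S0 by simp
        qed
        also have "((a / S) * (S / a * \<bar>u x\<bar>) + (1 - a / S) * (S / b * \<bar>v x\<bar>)) powr p
            \<le> (a / S) * (S / a * \<bar>u x\<bar>) powr p + (1 - a / S) * (S / b * \<bar>v x\<bar>) powr p"
          using a0 b0 S0 p by (intro convex_powr_ineq) (auto simp: S_def field_simps)
        also have "1 - a / S = b / S" using S0 by (simp add: S_def field_simps)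
        also have "(S / a * \<bar>u x\<bar>) powr p = (S / a) powr p * \<bar>u x\<bar> powr p"
          using a0 S0 powr_mult[of "S / a" "\<bar>u x\<bar>" p] by simp
        also have "(S / b * \<bar>v x\<bar>) powr p = (S / b) powr p * \<bar>v x\<bar> powr p"
          using b0 S0 powr_mult[of "S / b" "\<bar>v x\<bar>" p] by simp
        finally show ?thesis by (simp add: algebra_simps)
      qed
      have "(\<integral>x. \<bar>u x + v x\<bar> powr p \<partial>M) \<le>
          (\<integral>x. (a / S) * (S / a) powr p * \<bar>u x\<bar> powr p + (b / S) * (S / b) powr p * \<bar>v x\<bar> powr p \<partial>M)"
        using iuv iu iv pt by (intro integral_mono) auto
      also have "\<dots> = (a / S) * (S / a) powr p * Iu + (b / S) * (S / b) powr p * Iv"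
        using iu iv by (simp add: Iu_def Iv_def)
      also have "(a / S) * (S / a) powr p * Iu = a * S powr (p - 1)"
        using a0 S0 apow[symmetric] by (simp add: powr_divide powr_diff field_simps)
      also have "(b / S) * (S / b) powr p * Iv = b * S powr (p - 1)"
        using b0 S0 bpow[symmetric] by (simp add: powr_divide powr_diff field_simps)
      also have "a * S powr (p - 1) + b * S powr (p - 1) = S powr p"
        using S0 by (simp add: S_def[symmetric] powr_diff field_simps flip: distrib_right)
      finally have "(\<integral>x. \<bar>u x + v x\<bar> powr p \<partial>M) \<le> S powr p" .
      hence "(\<integral>x. \<bar>u x + v x\<bar> powr p \<partial>M) powr (1/p) \<le> (S powr p) powr (1/p)"
        using p by (intro powr_mono2) auto
      also have "(S powr p) powr (1/p) = S" using S0 p by (simp add: powr_powr)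
      finally show ?thesis by (simp add: S_def a_def b_def Iu_def Iv_def)
    qed
  qed
qed

lemma lborel_integral_shift:
  fixes F :: "'a::euclidean_space \<Rightarrow> real"
  assumes [measurable]: "F \<in> borel_measurable borel"
  shows "(\<integral>x. F (x + c) \<partial>lborel) = (\<integral>x. F x \<partial>lborel)"
proof -
  have "(\<integral>x. F x \<partial>lborel) = (\<integral>x. F x \<partial>(distr lborel borel ((+) c)))"
    by (simp add: lborel_distr_plus)
  also have "\<dots> = (\<integral>x. F (c + x) \<partial>lborel)" by (rule integral_distr) auto
  finally show ?thesis by (simp add: add.commute)
qed

lemma lborel_integrable_shift:
  fixes F :: "'a::euclidean_space \<Rightarrow> real"
  assumes [measurable]: "F \<in> borel_measurable borel"
  shows "integrable lborel (\<lambda>x. F (x + c)) \<longleftrightarrow> integrable lborel F"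
proof -
  have "integrable lborel F \<longleftrightarrow> integrable (distr lborel borel ((+) c)) F"
    by (simp add: lborel_distr_plus)
  also have "\<dots> \<longleftrightarrow> integrable lborel (\<lambda>x. F (c + x))" by (rule integrable_distr_eq) auto
  finally show ?thesis by (simp add: add.commute)
qed

lemma lborel_nn_integral_shift:
  fixes F :: "'a::euclidean_space \<Rightarrow> ennreal"
  assumes [measurable]: "F \<in> borel_measurable borel"
  shows "(\<integral>\<^sup>+x. F (x + c) \<partial>lborel) = (\<integral>\<^sup>+x. F x \<partial>lborel)"
proof -
  have "(\<integral>\<^sup>+x. F x \<partial>lborel) = (\<integral>\<^sup>+x. F x \<partial>(distr lborel borel ((+) c)))"
    by (simp add: lborel_distr_plus)
  also have "\<dots> = (\<integral>\<^sup>+x. F (c + x) \<partial>lborel)" by (rule nn_integral_distr) auto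
  finally show ?thesis by (simp add: add.commute)
qed

definition LP :: "real \<Rightarrow> ('a::euclidean_space \<Rightarrow> real) \<Rightarrow> bool" where
  "LP p u \<longleftrightarrow> integrable lborel (\<lambda>x. \<bar>u x\<bar> powr p)"

definition NP :: "real \<Rightarrow> ('a::euclidean_space \<Rightarrow> real) \<Rightarrow> real" where
  "NP p u = (\<integral>x. \<bar>u x\<bar> powr p \<partial>lborel) powr (1/p)"

lemma NP_nonneg: "0 \<le> NP p u" by (simp add: NP_def)

lemma borel_lebesgue_measurable:
  "u \<in> borel_measurable borel \<Longrightarrow> u \<in> borel_measurable (lebesgue :: 'a::euclidean_space measure)"
  by (rule measurable_completion) simp

lemma Lp_norm_borel:
  fixes u :: "'a::euclidean_space \<Rightarrow> real"
  assumes [measurable]: "u \<in> borel_measurable borel"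
  shows "Lp_norm p u = NP p u"
  unfolding Lp_norm_def NP_def
  by (subst integral_completion) auto

lemma in_Lp_borel:
  fixes u :: "'a::euclidean_space \<Rightarrow> real"
  assumes [measurable]: "u \<in> borel_measurable borel"
  shows "in_Lp p u \<longleftrightarrow> LP p u"
  unfolding in_Lp_def LP_def
  by (subst integrable_completion) (auto intro: borel_lebesgue_measurable)

lemma NP_add:
  fixes u v :: "'a::euclidean_space \<Rightarrow> real"
  assumes p: "1 \<le> p" and [measurable]: "u \<in> borel_measurable borel" "v \<in> borel_measurable borel"
    and "LP p u" "LP p v"
  shows "LP p (\<lambda>x. u x + v x)" "NP p (\<lambda>x. u x + v x) \<le> NP p u + NP p v"
  using assms integrable_powr_add[of p u lborel v] minkowski[of p u lborel v]
  by (auto simp: LP_def NP_def)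

lemma NP_uminus: "NP p (\<lambda>x. - u x) = NP p u" "LP p (\<lambda>x. - u x) = LP p u"
  by (simp_all add: NP_def LP_def)

lemma NP_diff:
  fixes u v :: "'a::euclidean_space \<Rightarrow> real"
  assumes p: "1 \<le> p" and [measurable]: "u \<in> borel_measurable borel" "v \<in> borel_measurable borel"
    and "LP p u" "LP p v"
  shows "LP p (\<lambda>x. u x - v x)" "NP p (\<lambda>x. u x - v x) \<le> NP p u + NP p v"
  using NP_add[of p u "\<lambda>x. - v x"] assms by (auto simp: NP_uminus)

lemma NP_shift:
  fixes u :: "'a::euclidean_space \<Rightarrow> real"
  assumes [measurable]: "u \<in> borel_measurable borel"
  shows "NP p (\<lambda>x. u (x + c)) = NP p u" "LP p (\<lambda>x. u (x + c)) = LP p u"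
  unfolding NP_def LP_def
  using lborel_integral_shift[of "\<lambda>x. \<bar>u x\<bar> powr p" c] lborel_integrable_shift[of "\<lambda>x. \<bar>u x\<bar> powr p" c]
  by auto

lemma NP_cmult:
  fixes u :: "'a::euclidean_space \<Rightarrow> real"
  assumes p: "0 < p"
  shows "NP p (\<lambda>x. c * u x) = \<bar>c\<bar> * NP p u"
proof -
  have "(\<integral>x. \<bar>c * u x\<bar> powr p \<partial>lborel) = \<bar>c\<bar> powr p * (\<integral>x. \<bar>u x\<bar> powr p \<partial>lborel)"
    by (simp add: abs_mult powr_mult)
  moreover have "(\<bar>c\<bar> powr p * I) powr (1/p) = \<bar>c\<bar> * I powr (1/p)" if "0 \<le> I" for I
    using p that by (simp add: powr_mult powr_powr)
  ultimately show ?thesis unfolding NP_def by simp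
qed

lemma LP_cmult: "LP p u \<Longrightarrow> LP p (\<lambda>x. c * u x)"
  unfolding LP_def by (simp add: abs_mult powr_mult)

lemma NP_cong_AE:
  assumes [measurable]: "u \<in> borel_measurable borel" "v \<in> borel_measurable borel"
    and "AE x in lborel. u x = v x"
  shows "NP p u = NP p v" "LP p u = LP p v"
proof -
  have "AE x in lborel. \<bar>u x\<bar> powr p = \<bar>v x\<bar> powr p" using assms(3) by eventually_elim simp
  hence "(\<integral>x. \<bar>u x\<bar> powr p \<partial>lborel) = (\<integral>x. \<bar>v x\<bar> powr p \<partial>lborel)"
    by (intro integral_cong_AE) auto
  thus "NP p u = NP p v" unfolding NP_def by simp
  show "LP p u = LP p v" unfolding LP_def using \<open>AE x in lborel. \<bar>u x\<bar> powr p = \<bar>v x\<bar> powr p\<close>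
    by (intro integrable_cong_AE) auto
qed

lemma NP_mono:
  fixes u v :: "'a::euclidean_space \<Rightarrow> real"
  assumes p: "0 < p" and [measurable]: "u \<in> borel_measurable borel"
    and "LP p v" and le: "\<And>x. \<bar>u x\<bar> \<le> \<bar>v x\<bar>"
  shows "LP p u" "NP p u \<le> NP p v"
proof -
  show i: "LP p u" unfolding LP_def
    by (rule Bochner_Integration.integrable_bound[of _ "\<lambda>x. \<bar>v x\<bar> powr p"])
      (use assms in \<open>auto simp: LP_def intro!: powr_mono2\<close>)
  have "(\<integral>x. \<bar>u x\<bar> powr p \<partial>lborel) \<le> (\<integral>x. \<bar>v x\<bar> powr p \<partial>lborel)"
    using i assms by (intro integral_mono) (auto simp: LP_def intro!: powr_mono2)
  thus "NP p u \<le> NP p v" unfolding NP_def using p by (intro powr_mono2) auto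
qed

lemma NP_Dl_le:
  fixes u :: "'a::euclidean_space \<Rightarrow> real"
  assumes p: "1 \<le> p" and [measurable]: "u \<in> borel_measurable borel" and "LP p u"
  shows "LP p (\<lambda>x. u (x + h) - u x)" "NP p (\<lambda>x. u (x + h) - u x) \<le> 2 * NP p u"
  using NP_diff[of p "\<lambda>x. u (x + h)" u] NP_shift[where u=u and c=h and p=p] assms by auto

lemma NP_zero_iff:
  fixes u :: "'a::euclidean_space \<Rightarrow> real"
  assumes p: "1 \<le> p" and [measurable]: "u \<in> borel_measurable borel" and "LP p u" and "NP p u = 0"
  shows "AE x in lborel. u x = 0"
proof -
  have "(\<integral>x. \<bar>u x\<bar> powr p \<partial>lborel) = 0" using assms by (simp add: NP_def)
  thus ?thesis using AE_zero_of_powr_integral[of p u lborel] assms by (auto simp: LP_def)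
qed

lemma le_one_plus_powr:
  fixes X p :: real assumes "1 \<le> p" "0 \<le> X" shows "X \<le> 1 + X powr p"
proof (cases "X \<le> 1")
  case True thus ?thesis by (smt (verit) powr_ge_zero)
next
  case False
  hence "X powr 1 \<le> X powr p" using assms by (intro powr_mono) auto
  thus ?thesis using False by simp
qed

lemma jensen_weighted:
  fixes w X :: "'b \<Rightarrow> real"
  assumes p: "1 \<le> p" and [measurable]: "w \<in> borel_measurable M" "X \<in> borel_measurable M"
    and w0: "\<And>y. 0 \<le> w y" and X0: "\<And>y. 0 \<le> X y" and iw: "integrable M w"
    and W: "0 < (\<integral>y. w y \<partial>M)" and iwX: "integrable M (\<lambda>y. w y * X y powr p)"
  shows "integrable M (\<lambda>y. w y * X y)"
    "(\<integral>y. w y * X y \<partial>M) powr p \<le> (\<integral>y. w y \<partial>M) powr (p - 1) * (\<integral>y. w y * X y powr p \<partial>M)"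
proof -
  define Wt where "Wt = (\<integral>y. w y \<partial>M)"
  show i1: "integrable M (\<lambda>y. w y * X y)"
  proof (rule Bochner_Integration.integrable_bound[of _ "\<lambda>y. w y + w y * X y powr p"])
    show "integrable M (\<lambda>y. w y + w y * X y powr p)" using iw iwX by auto
    show "AE y in M. norm (w y * X y) \<le> norm (w y + w y * X y powr p)"
    proof (intro AE_I2)
      fix y
      have "w y * X y \<le> w y * (1 + X y powr p)"
        using w0 X0 p le_one_plus_powr by (intro mult_left_mono) auto
      thus "norm (w y * X y) \<le> norm (w y + w y * X y powr p)"
        using w0[of y] X0[of y] by (simp add: algebra_simps)
    qed
  qed simp
  define m where "m = (\<integral>y. w y * X y \<partial>M) / Wt"
  have m0: "0 \<le> m" unfolding m_def Wt_def using W w0 X0 by (intro divide_nonneg_pos integral_nonneg) auto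
  have pt: "w y * (m powr p + p * m powr (p - 1) * (X y - m)) \<le> w y * X y powr p" for y
    using w0 p m0 X0 by (intro mult_left_mono tangent_powr) auto
  have eqp: "w y * (m powr p + p * m powr (p - 1) * (X y - m))
      = (m powr p - p * m powr (p - 1) * m) * w y + (p * m powr (p - 1)) * (w y * X y)" for y
    by (simp add: algebra_simps)
  have "(\<integral>y. (m powr p - p * m powr (p - 1) * m) * w y + (p * m powr (p - 1)) * (w y * X y) \<partial>M)
     \<le> (\<integral>y. w y * X y powr p \<partial>M)"
    using pt iw i1 iwX eqp by (intro integral_mono) auto
  moreover have "(\<integral>y. (m powr p - p * m powr (p - 1) * m) * w y + (p * m powr (p - 1)) * (w y * X y) \<partial>M) = (m powr p - p * m powr (p - 1) * m) * Wt + (p * m powr (p - 1)) * (\<integral>y. w y * X y \<partial>M)"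
    using iw i1 by (simp add: Wt_def)
  moreover have "(\<integral>y. w y * X y \<partial>M) = m * Wt" using W by (simp add: m_def Wt_def)
  ultimately have key: "Wt * m powr p \<le> (\<integral>y. w y * X y powr p \<partial>M)"
    by (simp add: algebra_simps)
  have "(\<integral>y. w y * X y \<partial>M) powr p = Wt powr p * m powr p"
    using \<open>(\<integral>y. w y * X y \<partial>M) = m * Wt\<close> m0 W by (simp add: powr_mult Wt_def mult.commute)
  also have "\<dots> = Wt powr (p - 1) * (Wt * m powr p)"
    using W by (simp add: Wt_def powr_diff field_simps)
  also have "\<dots> \<le> Wt powr (p - 1) * (\<integral>y. w y * X y powr p \<partial>M)"
    using key by (intro mult_left_mono) auto
  finally show "(\<integral>y. w y * X y \<partial>M) powr p \<le> (\<integral>y. w y \<partial>M) powr (p - 1) * (\<integral>y. w y * X y powr p \<partial>M)"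
    by (simp add: Wt_def)
qed

lemma NP_zero_fun: "0 < p \<Longrightarrow> NP p (\<lambda>x. 0) = 0" "LP p (\<lambda>x::'a::euclidean_space. 0)"
  by (simp_all add: NP_def LP_def)

lemma NP_le_imp_integral_le:
  assumes p: "0 < p" and "NP p u \<le> M"
  shows "(\<integral>x. \<bar>u x\<bar> powr p \<partial>lborel) \<le> M powr p"
proof -
  define I where "I = (\<integral>x. \<bar>u x\<bar> powr p \<partial>lborel)"
  have I0: "0 \<le> I" unfolding I_def by auto
  have "I = (I powr (1/p)) powr p" using I0 p by (simp add: powr_powr)
  also have "\<dots> \<le> M powr p" using assms I0 by (intro powr_mono2) (auto simp: NP_def I_def)
  finally show ?thesis by (simp add: I_def)
qed

lemma avg_bound:
  fixes c :: "'a::euclidean_space \<Rightarrow> real" and F :: "'a \<Rightarrow> 'a \<Rightarrow> real"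
  assumes p: "1 \<le> p" and [measurable]: "c \<in> borel_measurable borel"
    "case_prod F \<in> borel_measurable (lborel \<Otimes>\<^sub>M lborel)"
    and ic: "integrable lborel c" and M0: "0 \<le> M"
    and Fb: "\<And>y. c y \<noteq> 0 \<Longrightarrow> LP p (\<lambda>x. F x y) \<and> NP p (\<lambda>x. F x y) \<le> M"
  shows "LP p (\<lambda>x. \<integral>y. c y * F x y \<partial>lborel)"
    "NP p (\<lambda>x. \<integral>y. c y * F x y \<partial>lborel) \<le> (\<integral>y. \<bar>c y\<bar> \<partial>lborel) * M"
proof -
  define G where "G = (\<lambda>x. \<integral>y. c y * F x y \<partial>lborel)"
  define W where "W = (\<integral>y. \<bar>c y\<bar> \<partial>lborel)"
  have W0: "0 \<le> W" unfolding W_def by auto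
  have Gm: "G \<in> borel_measurable lborel" unfolding G_def by measurable
  hence Gm'[measurable]: "G \<in> borel_measurable borel" by (simp add: measurable_lborel1)
  have ica: "integrable lborel (\<lambda>y. \<bar>c y\<bar>)" using ic by auto
  have "LP p G \<and> NP p G \<le> W * M"
  proof (cases "W = 0")
    case True
    have "AE y in lborel. \<bar>c y\<bar> = 0" using integral_nonneg_eq_0_iff_AE[OF ica] True W_def by auto
    hence "G x = 0" for x unfolding G_def by (intro integral_eq_zero_AE) auto
    hence "G = (\<lambda>x. 0)" by auto
    thus ?thesis using p True by (simp add: NP_zero_fun)
  next
    case False
    hence Wp: "0 < W" using W0 by simp
    define I where "I = (\<lambda>x. \<integral>\<^sup>+y. ennreal (\<bar>c y\<bar> * \<bar>F x y\<bar> powr p) \<partial>lborel)"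
    have pt: "ennreal (\<bar>G x\<bar> powr p) \<le> ennreal (W powr (p - 1)) * I x" for x
    proof (cases "I x = \<infinity>")
      case True
      have "ennreal (W powr (p - 1)) \<noteq> 0" using Wp by simp
      thus ?thesis using True by (simp add: ennreal_mult_top)
    next
      case False
      have iwX: "integrable lborel (\<lambda>y. \<bar>c y\<bar> * \<bar>F x y\<bar> powr p)"
        by (rule integrableI_nonneg) (use False in \<open>auto simp: I_def top.not_eq_extremum\<close>)
      have Ix: "I x = ennreal (\<integral>y. \<bar>c y\<bar> * \<bar>F x y\<bar> powr p \<partial>lborel)"
        unfolding I_def by (rule nn_integral_eq_integral[OF iwX]) auto
      have J: "integrable lborel (\<lambda>y. \<bar>c y\<bar> * \<bar>F x y\<bar>)"
        "(\<integral>y. \<bar>c y\<bar> * \<bar>F x y\<bar> \<partial>lborel) powr p \<le> W powr (p - 1) * (\<integral>y. \<bar>c y\<bar> * \<bar>F x y\<bar> powr p \<partial>lborel)"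
        using jensen_weighted[of p "\<lambda>y. \<bar>c y\<bar>" lborel "\<lambda>y. \<bar>F x y\<bar>"] p ica Wp iwX
        by (auto simp: W_def)
      have "\<bar>G x\<bar> \<le> (\<integral>y. \<bar>c y\<bar> * \<bar>F x y\<bar> \<partial>lborel)"
        unfolding G_def using integral_abs_bound[of lborel "\<lambda>y. c y * F x y"] by (simp add: abs_mult)
      hence "\<bar>G x\<bar> powr p \<le> (\<integral>y. \<bar>c y\<bar> * \<bar>F x y\<bar> \<partial>lborel) powr p"
        using p by (intro powr_mono2) auto
      also note J(2)
      finally show ?thesis using Ix Wp by (simp add: ennreal_mult[symmetric])
    qed
    have "(\<integral>\<^sup>+x. ennreal (\<bar>G x\<bar> powr p) \<partial>lborel) \<le> (\<integral>\<^sup>+x. ennreal (W powr (p - 1)) * I x \<partial>lborel)"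
      by (intro nn_integral_mono pt)
    also have "\<dots> = ennreal (W powr (p - 1)) * (\<integral>\<^sup>+x. I x \<partial>lborel)"
      unfolding I_def by (rule nn_integral_cmult) measurable
    finally have s1: "(\<integral>\<^sup>+x. ennreal (\<bar>G x\<bar> powr p) \<partial>lborel) \<le> ennreal (W powr (p - 1)) * (\<integral>\<^sup>+x. I x \<partial>lborel)" .
    have "(\<integral>\<^sup>+x. I x \<partial>lborel) = (\<integral>\<^sup>+y. \<integral>\<^sup>+x. ennreal (\<bar>c y\<bar> * \<bar>F x y\<bar> powr p) \<partial>lborel \<partial>lborel)"
      unfolding I_def by (rule lborel_pair.Fubini'[symmetric]) measurable
    also have "\<dots> \<le> (\<integral>\<^sup>+y. ennreal (\<bar>c y\<bar> * M powr p) \<partial>lborel)"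
    proof (intro nn_integral_mono)
      fix y
      show "(\<integral>\<^sup>+x. ennreal (\<bar>c y\<bar> * \<bar>F x y\<bar> powr p) \<partial>lborel) \<le> ennreal (\<bar>c y\<bar> * M powr p)"
      proof (cases "c y = 0")
        case True thus ?thesis by simp
      next
        case False
        have LPy: "integrable lborel (\<lambda>x. \<bar>F x y\<bar> powr p)" using Fb[OF False] by (simp add: LP_def)
        have "(\<integral>\<^sup>+x. ennreal (\<bar>c y\<bar> * \<bar>F x y\<bar> powr p) \<partial>lborel)
            = ennreal (\<integral>x. \<bar>c y\<bar> * \<bar>F x y\<bar> powr p \<partial>lborel)"
          by (rule nn_integral_eq_integral) (use LPy in auto)
        also have "(\<integral>x. \<bar>c y\<bar> * \<bar>F x y\<bar> powr p \<partial>lborel) = \<bar>c y\<bar> * (\<integral>x. \<bar>F x y\<bar> powr p \<partial>lborel)"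
          by simp
        also have "\<dots> \<le> \<bar>c y\<bar> * M powr p"
          using NP_le_imp_integral_le[of p "\<lambda>x. F x y" M] Fb[OF False] p by (intro mult_left_mono) auto
        finally show ?thesis by (simp add: ennreal_leI)
      qed
    qed
    also have "\<dots> = ennreal (W * M powr p)"
      using ica by (subst nn_integral_eq_integral) (auto simp: W_def)
    finally have s2: "(\<integral>\<^sup>+x. I x \<partial>lborel) \<le> ennreal (W * M powr p)" .
    have "(\<integral>\<^sup>+x. ennreal (\<bar>G x\<bar> powr p) \<partial>lborel) \<le> ennreal (W powr (p - 1)) * ennreal (W * M powr p)"
      using s1 s2 by (meson mult_left_mono order_trans zero_le)
    also have "\<dots> = ennreal ((W * M) powr p)"
      using Wp M0 by (simp add: ennreal_mult[symmetric] powr_mult powr_diff field_simps)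
    finally have bd: "(\<integral>\<^sup>+x. ennreal (\<bar>G x\<bar> powr p) \<partial>lborel) \<le> ennreal ((W * M) powr p)" .
    have LPG: "LP p G" unfolding LP_def
      by (rule integrableI_nonneg) (use bd in \<open>auto simp: top.not_eq_extremum intro: le_less_trans\<close>)
    have "(\<integral>x. \<bar>G x\<bar> powr p \<partial>lborel) \<le> (W * M) powr p"
    proof -
      have "ennreal (\<integral>x. \<bar>G x\<bar> powr p \<partial>lborel) = (\<integral>\<^sup>+x. ennreal (\<bar>G x\<bar> powr p) \<partial>lborel)"
        by (rule nn_integral_eq_integral[symmetric]) (use LPG in \<open>auto simp: LP_def\<close>)
      hence "ennreal (\<integral>x. \<bar>G x\<bar> powr p \<partial>lborel) \<le> ennreal ((W * M) powr p)" using bd by simp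
      thus ?thesis by (simp add: ennreal_le_iff)
    qed
    hence "NP p G \<le> ((W * M) powr p) powr (1/p)"
      unfolding NP_def using p by (intro powr_mono2) auto
    also have "\<dots> = W * M" using p W0 M0 by (simp add: powr_powr)
    finally show ?thesis using LPG by simp
  qed
  thus "LP p (\<lambda>x. \<integral>y. c y * F x y \<partial>lborel)"
    "NP p (\<lambda>x. \<integral>y. c y * F x y \<partial>lborel) \<le> (\<integral>y. \<bar>c y\<bar> \<partial>lborel) * M"
    by (auto simp: G_def W_def)
qed

definition corr :: "('a::euclidean_space \<Rightarrow> real) \<Rightarrow> ('a \<Rightarrow> real) \<Rightarrow> 'a \<Rightarrow> real" where
  "corr \<rho> u x = (\<integral>y. \<rho> y * u (x + y) \<partial>lborel)"

lemma corr_measurable[measurable]: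
  fixes \<rho> u :: "'a::euclidean_space \<Rightarrow> real"
  assumes [measurable]: "\<rho> \<in> borel_measurable borel" "u \<in> borel_measurable borel"
  shows "corr \<rho> u \<in> borel_measurable borel"
proof -
  have "corr \<rho> u \<in> borel_measurable lborel" unfolding corr_def[abs_def] by measurable
  thus ?thesis by (simp add: measurable_lborel1)
qed

lemma corr_integrable:
  fixes \<rho> u :: "'a::euclidean_space \<Rightarrow> real"
  assumes p: "1 \<le> p" and [measurable]: "\<rho> \<in> borel_measurable borel" "u \<in> borel_measurable borel"
    and bd: "\<And>y. \<bar>\<rho> y\<bar> \<le> R" and ir: "integrable lborel \<rho>" and u: "LP p u"
  shows "integrable lborel (\<lambda>y. \<rho> y * u (x + y))"
proof (rule Bochner_Integration.integrable_bound[of _ "\<lambda>y. \<bar>\<rho> y\<bar> + R * \<bar>u (x + y)\<bar> powr p"])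
  have "LP p (\<lambda>y. u (y + x))" using NP_shift(2)[of u p x] u by simp
  hence "integrable lborel (\<lambda>y. \<bar>u (x + y)\<bar> powr p)" by (simp add: LP_def add.commute)
  thus "integrable lborel (\<lambda>y. \<bar>\<rho> y\<bar> + R * \<bar>u (x + y)\<bar> powr p)" using ir by auto
  show "AE y in lborel. norm (\<rho> y * u (x + y)) \<le> norm (\<bar>\<rho> y\<bar> + R * \<bar>u (x + y)\<bar> powr p)"
  proof (intro AE_I2)
    fix y
    have R0: "0 \<le> R" using bd[of y] by simp
    have "\<bar>\<rho> y * u (x + y)\<bar> \<le> \<bar>\<rho> y\<bar> * (1 + \<bar>u (x + y)\<bar> powr p)"
      unfolding abs_mult using le_one_plus_powr[OF p] by (intro mult_left_mono) auto
    also have "\<dots> \<le> \<bar>\<rho> y\<bar> + R * \<bar>u (x + y)\<bar> powr p"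
      using bd[of y] by (simp add: algebra_simps mult_right_mono)
    finally show "norm (\<rho> y * u (x + y)) \<le> norm (\<bar>\<rho> y\<bar> + R * \<bar>u (x + y)\<bar> powr p)" by simp
  qed
qed simp

lemma corr_bound:
  fixes \<rho> u :: "'a::euclidean_space \<Rightarrow> real"
  assumes p: "1 \<le> p" and [measurable]: "\<rho> \<in> borel_measurable borel" "u \<in> borel_measurable borel"
    and ir: "integrable lborel \<rho>" and u: "LP p u"
  shows "LP p (corr \<rho> u)" "NP p (corr \<rho> u) \<le> (\<integral>y. \<bar>\<rho> y\<bar> \<partial>lborel) * NP p u"
proof -
  have F: "case_prod (\<lambda>x y. u (x + y)) \<in> borel_measurable (lborel \<Otimes>\<^sub>M lborel)" by measurable
  have "\<And>y. LP p (\<lambda>x. u (x + y)) \<and> NP p (\<lambda>x. u (x + y)) \<le> NP p u"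
    using NP_shift[of u] u by simp
  thus "LP p (corr \<rho> u)" "NP p (corr \<rho> u) \<le> (\<integral>y. \<bar>\<rho> y\<bar> \<partial>lborel) * NP p u"
    using avg_bound[of p \<rho> "\<lambda>x y. u (x + y)" "NP p u", OF p _ F ir NP_nonneg] unfolding corr_def[abs_def]
    by auto
qed

lemma corr_diff:
  fixes \<rho> u v :: "'a::euclidean_space \<Rightarrow> real"
  assumes p: "1 \<le> p" and [measurable]: "\<rho> \<in> borel_measurable borel" "u \<in> borel_measurable borel" "v \<in> borel_measurable borel"
    and bd: "\<And>y. \<bar>\<rho> y\<bar> \<le> R" and ir: "integrable lborel \<rho>" and u: "LP p u" and v: "LP p v"
  shows "corr \<rho> (\<lambda>x. u x - v x) x = corr \<rho> u x - corr \<rho> v x"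
  unfolding corr_def using corr_integrable[OF p _ _ bd ir u] corr_integrable[OF p _ _ bd ir v]
  by (simp add: right_diff_distrib)

lemma corr_shift_diff:
  fixes \<rho> u :: "'a::euclidean_space \<Rightarrow> real"
  assumes p: "1 \<le> p" and [measurable]: "\<rho> \<in> borel_measurable borel" "u \<in> borel_measurable borel"
    and bd: "\<And>y. \<bar>\<rho> y\<bar> \<le> R" and ir: "integrable lborel \<rho>" and u: "LP p u"
  shows "corr \<rho> u (x + h) - corr \<rho> u x = corr (\<lambda>y. \<rho> (y - h) - \<rho> y) u x"
proof -
  have "corr \<rho> u (x + h) = (\<integral>y. \<rho> (y - h) * u (x + y) \<partial>lborel)"
    unfolding corr_def
    using lborel_integral_shift[of "\<lambda>y. \<rho> (y - h) * u (x + y)" h]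
    by (simp add: algebra_simps)
  moreover have "integrable lborel (\<lambda>y. \<rho> (y - h) * u (x + y))"
  proof -
    have "integrable lborel (\<lambda>y. \<rho> (y + (- h)))" using lborel_integrable_shift[of \<rho> "- h"] ir by simp
    thus ?thesis using corr_integrable[OF p _ _ _ _ u, of "\<lambda>y. \<rho> (y - h)" R x] bd by simp
  qed
  ultimately show ?thesis
    unfolding corr_def using corr_integrable[OF p _ _ bd ir u]
    by (simp add: left_diff_distrib)
qed

lemma corr_shift_comm:
  fixes \<rho> u :: "'a::euclidean_space \<Rightarrow> real"
  assumes p: "1 \<le> p" and [measurable]: "\<rho> \<in> borel_measurable borel" "u \<in> borel_measurable borel"
    and bd: "\<And>y. \<bar>\<rho> y\<bar> \<le> R" and ir: "integrable lborel \<rho>" and u: "LP p u"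
  shows "corr \<rho> u (x + h) - corr \<rho> u x = corr \<rho> (\<lambda>z. u (z + h) - u z) x"
proof -
  have uh: "LP p (\<lambda>z. u (z + h))" using NP_shift[of u p h] u by simp
  have "corr \<rho> u (x + h) = corr \<rho> (\<lambda>z. u (z + h)) x"
    unfolding corr_def by (simp add: algebra_simps)
  thus ?thesis using corr_diff[OF p _ _ _ bd ir uh u, of x] by simp
qed

lemma corr_approx_bound:
  fixes \<rho> f :: "'a::euclidean_space \<Rightarrow> real"
  assumes p: "1 \<le> p" and [measurable]: "\<rho> \<in> borel_measurable borel" "f \<in> borel_measurable borel"
    and bd: "\<And>y. \<bar>\<rho> y\<bar> \<le> R" and ir: "integrable lborel \<rho>" and u: "LP p f"
    and one: "(\<integral>y. \<rho> y \<partial>lborel) = 1" and M0: "0 \<le> M"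
    and Mb: "\<And>y. \<rho> y \<noteq> 0 \<Longrightarrow> NP p (\<lambda>x. f (x + y) - f x) \<le> M"
  shows "LP p (\<lambda>x. f x - corr \<rho> f x)" "NP p (\<lambda>x. f x - corr \<rho> f x) \<le> (\<integral>y. \<bar>\<rho> y\<bar> \<partial>lborel) * M"
proof -
  have eq: "f x - corr \<rho> f x = (\<integral>y. \<rho> y * (f x - f (x + y)) \<partial>lborel)" for x
  proof -
    have "f x = (\<integral>y. \<rho> y * f x \<partial>lborel)" using one by simp
    thus ?thesis unfolding corr_def using corr_integrable[OF p _ _ bd ir u] ir
      by (simp add: right_diff_distrib)
  qed
  have F: "case_prod (\<lambda>x y. f x - f (x + y)) \<in> borel_measurable (lborel \<Otimes>\<^sub>M lborel)" by measurable
  have "\<And>y. \<rho> y \<noteq> 0 \<Longrightarrow> LP p (\<lambda>x. f x - f (x + y)) \<and> NP p (\<lambda>x. f x - f (x + y)) \<le> M"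
  proof -
    fix y assume "\<rho> y \<noteq> 0"
    have "LP p (\<lambda>x. f (x + y) - f x)" using NP_Dl_le[OF p _ u] by simp
    moreover have "NP p (\<lambda>x. f x - f (x + y)) = NP p (\<lambda>x. f (x + y) - f x)"
      using NP_uminus(1)[of p "\<lambda>x. f (x + y) - f x"] by simp
    moreover have "LP p (\<lambda>x. f x - f (x + y)) = LP p (\<lambda>x. f (x + y) - f x)"
      using NP_uminus(2)[of p "\<lambda>x. f (x + y) - f x"] by simp
    ultimately show "LP p (\<lambda>x. f x - f (x + y)) \<and> NP p (\<lambda>x. f x - f (x + y)) \<le> M"
      using Mb[OF \<open>\<rho> y \<noteq> 0\<close>] by simp
  qed
  from avg_bound[OF p _ F ir M0 this]
  show "LP p (\<lambda>x. f x - corr \<rho> f x)" "NP p (\<lambda>x. f x - corr \<rho> f x) \<le> (\<integral>y. \<bar>\<rho> y\<bar> \<partial>lborel) * M"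
    by (simp_all add: eq)
qed

lemma smooth_funI_class:
  assumes "g \<in> S" and dS: "\<And>h. h \<in> S \<Longrightarrow> h differentiable_on UNIV"
    and DS: "\<And>h v. h \<in> S \<Longrightarrow> (\<lambda>x. frechet_derivative h (at x) v) \<in> S"
  shows "smooth_fun g"
proof -
  have "h \<in> S" if "h \<in> iter_derivs g" for h
    using that by (induction rule: iter_derivs.induct) (use assms in auto)
  thus ?thesis unfolding smooth_fun_def using dS by auto
qed

lemma iter_derivs_diff:
  assumes "smooth_fun g" "h \<in> iter_derivs g"
  shows "h differentiable_on UNIV" "continuous_on UNIV h"
    "(\<lambda>x. frechet_derivative h (at x) v) \<in> iter_derivs g"
    "(h has_derivative frechet_derivative h (at x)) (at x)"
proof -
  show d: "h differentiable_on UNIV" using assms by (auto simp: smooth_fun_def)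
  thus "continuous_on UNIV h" by (rule differentiable_imp_continuous_on)
  show "(\<lambda>x. frechet_derivative h (at x) v) \<in> iter_derivs g"
    by (rule iter_derivs.step[OF assms(2) d])
  show "(h has_derivative frechet_derivative h (at x)) (at x)"
    using d frechet_derivative_works by (auto simp: differentiable_on_def)
qed

lemma iter_derivs_support:
  assumes "h \<in> iter_derivs g" "x \<notin> closure {x. g x \<noteq> 0}"
  shows "h x = 0"
  using assms
proof (induction arbitrary: x rule: iter_derivs.induct)
  case base thus ?case using closure_subset[of "{x. g x \<noteq> 0}"] by auto
next
  case (step h v)
  define U where "U = - closure {x. g x \<noteq> 0}"
  have U: "open U" "x \<in> U" using step by (auto simp: U_def)
  have z: "0 = h y" if "y \<in> U" for y using step.IH[of y] that by (simp add: U_def)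
  have "((\<lambda>_. 0::real) has_derivative (\<lambda>_. 0)) (at x)" by simp
  hence "(h has_derivative (\<lambda>_. 0)) (at x)"
    by (rule has_derivative_transform_within_open[OF _ U z])
  hence "frechet_derivative h (at x) = (\<lambda>_. 0)" by (rule frechet_derivative_at[symmetric])
  thus ?case by simp
qed

lemma Cc_infD:
  assumes "g \<in> Cc_inf"
  shows "smooth_fun g" "compact (closure {x. g x \<noteq> 0})" "continuous_on UNIV g"
    "g \<in> borel_measurable borel"
  using assms iter_derivs_diff(2)[OF _ iter_derivs.base, of g]
  by (auto simp: Cc_inf_def intro: borel_measurable_continuous_onI)

lemma iter_derivs_bounded:
  assumes "g \<in> Cc_inf" "h \<in> iter_derivs g"
  shows "\<exists>B. \<forall>x. \<bar>h x\<bar> \<le> B"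
proof -
  define K where "K = closure {x. g x \<noteq> 0}"
  have K: "compact K" using Cc_infD[OF assms(1)] by (simp add: K_def)
  have c: "continuous_on K h" using iter_derivs_diff(2)[OF Cc_infD(1)[OF assms(1)] assms(2)]
    by (rule continuous_on_subset) simp
  have "compact (h ` K)" using compact_continuous_image[OF c K] .
  then obtain B where B: "\<And>y. y \<in> h ` K \<Longrightarrow> norm y \<le> B" using compact_imp_bounded bounded_iff by metis
  have "\<bar>h x\<bar> \<le> max B 0" for x
  proof (cases "x \<in> K")
    case True thus ?thesis using B[of "h x"] by auto
  next
    case False thus ?thesis using iter_derivs_support[OF assms(2), of x] by (simp add: K_def)
  qed
  thus ?thesis by blast
qed

lemma iter_derivs_lipschitz:
  assumes "g \<in> Cc_inf" "h \<in> iter_derivs g"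
  shows "\<exists>L. \<forall>x y. \<bar>h x - h y\<bar> \<le> L * norm (x - y)"
proof -
  have sm: "smooth_fun g" using Cc_infD[OF assms(1)] by simp
  have "\<forall>b\<in>Basis. \<exists>B. \<forall>x. \<bar>frechet_derivative h (at x) b\<bar> \<le> B"
    using iter_derivs_bounded[OF assms(1) iter_derivs_diff(3)[OF sm assms(2)]] by blast
  then obtain B where B: "\<And>b x. b \<in> Basis \<Longrightarrow> \<bar>frechet_derivative h (at x) b\<bar> \<le> B b" by metis
  define L where "L = (\<Sum>b\<in>Basis. B b)"
  have der: "(h has_derivative frechet_derivative h (at x)) (at x within UNIV)" for x
    using iter_derivs_diff(4)[OF sm assms(2)] by simp
  have on: "onorm (frechet_derivative h (at x)) \<le> L" for x
  proof -
    have bl: "bounded_linear (frechet_derivative h (at x))"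
      using der[of x] has_derivative_bounded_linear by blast
    have "onorm (frechet_derivative h (at x)) \<le> (\<Sum>b\<in>Basis. norm (frechet_derivative h (at x) b))"
      by (rule onorm_componentwise[OF bl])
    also have "\<dots> \<le> L" unfolding L_def using B by (intro sum_mono) auto
    finally show ?thesis .
  qed
  have "norm (h x - h y) \<le> L * norm (x - y)" for x y
    by (rule differentiable_bound[OF convex_UNIV der on]) auto
  thus ?thesis by auto
qed

lemma Cc_inf_bounded_support:
  assumes "g \<in> Cc_inf"
  shows "\<exists>R>0. \<forall>x. norm x > R \<longrightarrow> g x = 0"
proof -
  have "bounded (closure {x. g x \<noteq> 0})" using Cc_infD(2)[OF assms] compact_imp_bounded by blast
  then obtain R where R: "R > 0" "\<And>x. x \<in> closure {x. g x \<noteq> 0} \<Longrightarrow> norm x \<le> R"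
    using bounded_pos by metis
  have "g x = 0" if "norm x > R" for x using R(2)[of x] closure_subset[of "{x. g x \<noteq> 0}"] that by force
  thus ?thesis using R(1) by blast
qed

lemma indicator_powr: "0 < p \<Longrightarrow> \<bar>indicator A x :: real\<bar> powr p = indicator A x"
  "0 < p \<Longrightarrow> (indicator A x :: real) powr p = indicator A x"
  by (simp_all add: indicator_def)

lemma NP_indicator_cball:
  fixes c :: "'a::euclidean_space"
  assumes p: "0 < p"
  shows "LP p (indicator (cball c r) :: 'a \<Rightarrow> real)"
    "NP p (indicator (cball c r) :: 'a \<Rightarrow> real) = measure lborel (cball c r) powr (1/p)"
proof -
  have i: "integrable lborel (indicator (cball c r) :: 'a \<Rightarrow> real)"
    by (rule integrable_real_indicator) (use emeasure_lborel_cball_finite[of c r] in \<open>auto simp: top.not_eq_extremum\<close>)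
  show "LP p (indicator (cball c r) :: 'a \<Rightarrow> real)" unfolding LP_def using i p by (simp add: indicator_powr)
  show "NP p (indicator (cball c r) :: 'a \<Rightarrow> real) = measure lborel (cball c r) powr (1/p)"
    unfolding NP_def using p by (simp add: indicator_powr)
qed

lemma Cc_inf_LP:
  fixes g :: "'a::euclidean_space \<Rightarrow> real"
  assumes "g \<in> Cc_inf" "0 < p"
  shows "LP p g" "integrable lborel g"
proof -
  obtain B where B: "\<And>x. \<bar>g x\<bar> \<le> B" using iter_derivs_bounded[OF assms(1) iter_derivs.base] by blast
  obtain R where R: "R > 0" "\<And>x. norm x > R \<Longrightarrow> g x = 0" using Cc_inf_bounded_support[OF assms(1)] by blast
  have B0: "0 \<le> B" using B[of 0] by simp
  have le: "\<bar>g x\<bar> \<le> \<bar>B * indicator (cball 0 R) x\<bar>" for x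
    using B[of x] R(2)[of x] B0 by (cases "norm x > R") (auto simp: indicator_def dist_norm)
  have gm[measurable]: "g \<in> borel_measurable borel" using Cc_infD[OF assms(1)] by simp
  show "LP p g" using NP_mono(1)[OF assms(2) gm LP_cmult[OF NP_indicator_cball(1)[OF assms(2)]] le] by simp
  have "LP 1 g" using NP_mono(1)[OF _ gm LP_cmult[OF NP_indicator_cball(1)] le] by simp
  hence "integrable lborel (\<lambda>x. \<bar>g x\<bar>)" unfolding LP_def by simp
  thus "integrable lborel g" using integrable_abs_iff[of g lborel] by simp
qed

lemma Cc_inf_diff_bound:
  fixes g :: "'a::euclidean_space \<Rightarrow> real"
  assumes "g \<in> Cc_inf" "1 \<le> p"
  shows "\<exists>C\<ge>0. \<forall>h. norm h \<le> 1 \<longrightarrow> NP p (\<lambda>x. g (x + h) - g x) \<le> C * norm h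
      \<and> (\<integral>x. \<bar>g (x + h) - g x\<bar> \<partial>lborel) \<le> C * norm h"
proof -
  obtain L0 where L0: "\<And>x y. \<bar>g x - g y\<bar> \<le> L0 * norm (x - y)"
    using iter_derivs_lipschitz[OF assms(1) iter_derivs.base] by blast
  define L where "L = max L0 0"
  have L: "\<bar>g x - g y\<bar> \<le> L * norm (x - y)" for x y
    using L0[of x y] by (smt (verit) L_def mult_right_mono norm_ge_zero)
  have L0: "0 \<le> L" by (simp add: L_def)
  obtain R where R: "R > 0" "\<And>x. norm x > R \<Longrightarrow> g x = 0" using Cc_inf_bounded_support[OF assms(1)] by blast
  have gm[measurable]: "g \<in> borel_measurable borel" using Cc_infD[OF assms(1)] by simp
  define V where "V = measure lborel (cball (0::'a) (R + 1))"
  define C where "C = L * max (V powr (1/p)) V"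
  have "0 \<le> max (V powr (1/p)) V" by (simp add: le_max_iff_disj)
  hence C0: "0 \<le> C" using L0 by (simp add: C_def)
  have "NP p (\<lambda>x. g (x + h) - g x) \<le> C * norm h \<and> (\<integral>x. \<bar>g (x + h) - g x\<bar> \<partial>lborel) \<le> C * norm h"
    if h: "norm h \<le> 1" for h
  proof -
    have le: "\<bar>g (x + h) - g x\<bar> \<le> \<bar>(L * norm h) * indicator (cball 0 (R + 1)) x\<bar>" for x
    proof (cases "norm x \<le> R + 1")
      case True thus ?thesis using L[of "x + h" x] L0 by (simp add: indicator_def)
    next
      case False
      have "norm x \<le> norm (x + h) + norm h" using norm_triangle_ineq4[of "x + h" h] by simp
      hence "norm (x + h) > R" using False h by linarith
      thus ?thesis using False R(2)[of x] R(2)[of "x + h"] by (simp add: indicator_def)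
    qed
    have p0: "0 < p" using assms by simp
    have mh: "(\<lambda>x. g (x + h) - g x) \<in> borel_measurable borel" by measurable
    have "NP p (\<lambda>x. g (x + h) - g x) \<le> NP p (\<lambda>x. (L * norm h) * indicator (cball (0::'a) (R + 1)) x)"
      using NP_mono(2)[OF p0, of "\<lambda>x. g (x + h) - g x" "\<lambda>x. (L * norm h) * indicator (cball (0::'a) (R + 1)) x"]
        LP_cmult[OF NP_indicator_cball(1)[OF p0], of "L * norm h" "0::'a" "R + 1"] le mh by blast
    also have "\<dots> = L * norm h * V powr (1/p)"
      using NP_cmult[OF p0, of "L * norm h" "indicator (cball (0::'a) (R+1))"] NP_indicator_cball(2)[OF p0, of "0::'a" "R+1"] L0 by (simp add: V_def)
    also have "\<dots> \<le> C * norm h" using L0 by (simp add: C_def mult_left_mono mult_right_mono algebra_simps)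
    finally have 1: "NP p (\<lambda>x. g (x + h) - g x) \<le> C * norm h" .
    have "(\<integral>x. \<bar>g (x + h) - g x\<bar> \<partial>lborel) \<le> (\<integral>x. (L * norm h) * indicator (cball (0::'a) (R + 1)) x \<partial>lborel)"
    proof (rule integral_mono)
      show "integrable lborel (\<lambda>x. (L * norm h) * indicator (cball (0::'a) (R + 1)) x :: real)"
        by (intro integrable_mult_right integrable_real_indicator) (use emeasure_lborel_cball_finite[of "0::'a" "R+1"] in auto)
      show "integrable lborel (\<lambda>x. \<bar>g (x + h) - g x\<bar>)"
        by (rule Bochner_Integration.integrable_bound[OF \<open>integrable lborel (\<lambda>x. (L * norm h) * indicator (cball (0::'a) (R + 1)) x :: real)\<close>]) (use le in auto)
      show "\<bar>g (x + h) - g x\<bar> \<le> L * norm h * indicator (cball (0::'a) (R + 1)) x" for x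
        using le[of x] L0 by (simp add: indicator_def)
    qed
    also have "\<dots> = L * norm h * V" by (simp add: V_def)
    also have "\<dots> \<le> C * norm h"
    proof -
      have "L * norm h * V \<le> L * norm h * max (V powr (1/p)) V" using L0 by (intro mult_left_mono) auto
      thus ?thesis by (simp add: C_def algebra_simps)
    qed
    finally show ?thesis using 1 by simp
  qed
  thus ?thesis using C0 by blast
qed

lemma compact_closed_subset: "A \<subseteq> K \<Longrightarrow> compact K \<Longrightarrow> closed A \<Longrightarrow> compact A"
  by (metis compact_Int_closed inf.absorb_iff2)

lemma Cc_inf_zero: "(\<lambda>x. 0) \<in> Cc_inf"
proof -
  have "smooth_fun (\<lambda>x::'a. 0::real)"
    by (rule smooth_funI_class[where S="{\<lambda>x. 0}"]) (auto simp: frechet_derivative_const)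
  thus ?thesis by (simp add: Cc_inf_def)
qed

inductive_set prodsum :: "('a::euclidean_space \<Rightarrow> real) \<Rightarrow> ('a \<Rightarrow> real) set" for g where
  pr: "a \<in> iter_derivs g \<Longrightarrow> b \<in> iter_derivs g \<Longrightarrow> (\<lambda>x. a x * b x) \<in> prodsum g"
| ad: "q1 \<in> prodsum g \<Longrightarrow> q2 \<in> prodsum g \<Longrightarrow> (\<lambda>x. q1 x + q2 x) \<in> prodsum g"

lemma prodsum_closed:
  assumes sm: "smooth_fun g" and "q \<in> prodsum g"
  shows "q differentiable_on UNIV \<and> (\<forall>v. (\<lambda>x. frechet_derivative q (at x) v) \<in> prodsum g)"
  using assms(2)
proof (induction rule: prodsum.induct)
  case (pr a b)
  have da: "(a has_derivative frechet_derivative a (at x)) (at x)" for x using iter_derivs_diff(4)[OF sm pr(1)] .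
  have db: "(b has_derivative frechet_derivative b (at x)) (at x)" for x using iter_derivs_diff(4)[OF sm pr(2)] .
  have d: "((\<lambda>x. a x * b x) has_derivative (\<lambda>v. a x * frechet_derivative b (at x) v + frechet_derivative a (at x) v * b x)) (at x)" for x
    using has_derivative_mult[OF da db] .
  have fd: "frechet_derivative (\<lambda>x. a x * b x) (at x) v = a x * frechet_derivative b (at x) v + frechet_derivative a (at x) v * b x" for x v
    using frechet_derivative_at[OF d[of x]] by metis
  show ?case
  proof (intro conjI allI)
    show "(\<lambda>x. a x * b x) differentiable_on UNIV" using d by (auto simp: differentiable_on_def differentiable_def)
    fix v
    have "(\<lambda>x. a x * frechet_derivative b (at x) v) \<in> prodsum g"
      by (rule prodsum.pr[OF pr(1) iter_derivs_diff(3)[OF sm pr(2)]])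
    moreover have "(\<lambda>x. frechet_derivative a (at x) v * b x) \<in> prodsum g"
      by (rule prodsum.pr[OF iter_derivs_diff(3)[OF sm pr(1)] pr(2)])
    ultimately show "(\<lambda>x. frechet_derivative (\<lambda>x. a x * b x) (at x) v) \<in> prodsum g"
      unfolding fd by (rule prodsum.ad)
  qed
next
  case (ad q1 q2)
  have d1: "(q1 has_derivative frechet_derivative q1 (at x)) (at x)" for x
  proof -
    have "q1 differentiable (at x)" using ad.IH by (auto simp: differentiable_on_def)
    thus ?thesis using frechet_derivative_works by blast
  qed
  have d2: "(q2 has_derivative frechet_derivative q2 (at x)) (at x)" for x
  proof -
    have "q2 differentiable (at x)" using ad.IH by (auto simp: differentiable_on_def)
    thus ?thesis using frechet_derivative_works by blast
  qed
  have d: "((\<lambda>x. q1 x + q2 x) has_derivative (\<lambda>v. frechet_derivative q1 (at x) v + frechet_derivative q2 (at x) v)) (at x)" for x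
    using has_derivative_add[OF d1 d2] .
  have fd: "frechet_derivative (\<lambda>x. q1 x + q2 x) (at x) v = frechet_derivative q1 (at x) v + frechet_derivative q2 (at x) v" for x v
    using frechet_derivative_at[OF d[of x]] by metis
  show ?case
  proof (intro conjI allI)
    show "(\<lambda>x. q1 x + q2 x) differentiable_on UNIV" using d by (auto simp: differentiable_on_def differentiable_def)
    fix v
    show "(\<lambda>x. frechet_derivative (\<lambda>x. q1 x + q2 x) (at x) v) \<in> prodsum g"
      unfolding fd using ad.IH by (intro prodsum.ad) auto
  qed
qed

lemma Cc_inf_square:
  assumes "g \<in> Cc_inf"
  shows "(\<lambda>x. g x * g x) \<in> Cc_inf"
proof -
  have sm: "smooth_fun g" using Cc_infD[OF assms] by simp
  have "smooth_fun (\<lambda>x. g x * g x)"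
    by (rule smooth_funI_class[where S="prodsum g"])
       (use prodsum_closed[OF sm] prodsum.pr[OF iter_derivs.base iter_derivs.base] in auto)
  moreover have "{x. g x * g x \<noteq> 0} = {x. g x \<noteq> 0}" by auto
  ultimately show ?thesis using assms by (simp add: Cc_inf_def)
qed

lemma Cc_inf_scale:
  fixes g :: "'a::euclidean_space \<Rightarrow> real"
  assumes "g \<in> Cc_inf" "r \<noteq> 0"
  shows "(\<lambda>x. c * g (r *\<^sub>R x)) \<in> Cc_inf"
proof -
  have sm: "smooth_fun g" using Cc_infD[OF assms(1)] by simp
  define S where "S = {f. \<exists>c a. a \<in> iter_derivs g \<and> f = (\<lambda>x. c * a (r *\<^sub>R x))}"
  have cl: "f differentiable_on UNIV \<and> (\<forall>v. (\<lambda>x. frechet_derivative f (at x) v) \<in> S)" if "f \<in> S" for f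
  proof -
    obtain c a where a: "a \<in> iter_derivs g" and f: "f = (\<lambda>x. c * a (r *\<^sub>R x))" using \<open>f \<in> S\<close> S_def by auto
    have da: "(a has_derivative frechet_derivative a (at x)) (at x)" for x using iter_derivs_diff(4)[OF sm a] .
    have bl: "linear (frechet_derivative a (at x))" for x using da[of x] has_derivative_linear by blast
    have d: "(f has_derivative (\<lambda>v. c * frechet_derivative a (at (r *\<^sub>R x)) (r *\<^sub>R v))) (at x)" for x
    proof -
      have "((\<lambda>x. r *\<^sub>R x) has_derivative (\<lambda>v. r *\<^sub>R v)) (at x)" by (auto intro!: derivative_eq_intros)
      from has_derivative_compose[OF this da[of "r *\<^sub>R x"]]
      have "((\<lambda>x. a (r *\<^sub>R x)) has_derivative (\<lambda>v. frechet_derivative a (at (r *\<^sub>R x)) (r *\<^sub>R v))) (at x)"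
        by (simp add: o_def)
      from has_derivative_mult_right[OF this, of c] show ?thesis by (simp add: f)
    qed
    have fd: "frechet_derivative f (at x) v = (c * r) * frechet_derivative a (at (r *\<^sub>R x)) v" for x v
      using frechet_derivative_at[OF d[of x]] linear_scale[OF bl[of "r *\<^sub>R x"], of r v] by (metis mult.assoc real_scaleR_def)
    show ?thesis
    proof (intro conjI allI)
      show "f differentiable_on UNIV" using d by (auto simp: differentiable_on_def differentiable_def)
      fix v
      show "(\<lambda>x. frechet_derivative f (at x) v) \<in> S"
        unfolding fd S_def using iter_derivs_diff(3)[OF sm a, of v] by blast
    qed
  qed
  have "smooth_fun (\<lambda>x. c * g (r *\<^sub>R x))"
  proof (rule smooth_funI_class[where S=S])
    show "(\<lambda>x. c * g (r *\<^sub>R x)) \<in> S" unfolding S_def using iter_derivs.base by blast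
  qed (use cl in auto)
  moreover have "compact (closure {x. c * g (r *\<^sub>R x) \<noteq> 0})"
  proof -
    define K where "K = closure {x. g x \<noteq> 0}"
    have K: "compact K" using Cc_infD(2)[OF assms(1)] by (simp add: K_def)
    have cK: "compact ((\<lambda>y. (1/r) *\<^sub>R y) ` K)" by (rule compact_continuous_image) (auto intro: continuous_intros K)
    have "{x. c * g (r *\<^sub>R x) \<noteq> 0} \<subseteq> (\<lambda>y. (1/r) *\<^sub>R y) ` K"
    proof
      fix x assume "x \<in> {x. c * g (r *\<^sub>R x) \<noteq> 0}"
      hence "r *\<^sub>R x \<in> K" using closure_subset[of "{x. g x \<noteq> 0}"] by (auto simp: K_def)
      moreover have "x = (1/r) *\<^sub>R (r *\<^sub>R x)" using assms(2) by simp
      ultimately show "x \<in> (\<lambda>y. (1/r) *\<^sub>R y) ` K" by blast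
    qed
    hence "closure {x. c * g (r *\<^sub>R x) \<noteq> 0} \<subseteq> (\<lambda>y. (1/r) *\<^sub>R y) ` K"
      using cK by (simp add: closure_minimal compact_imp_closed)
    thus ?thesis using cK compact_closed_subset closed_closure by blast
  qed
  ultimately show ?thesis by (simp add: Cc_inf_def)
qed

lemma lborel_integral_cbox:
  fixes F :: "'a::euclidean_space \<Rightarrow> real"
  assumes c: "continuous_on UNIV F" and z: "\<And>t. t \<notin> cbox a b \<Longrightarrow> F t = 0"
  shows "integrable lborel F" "integral\<^sup>L lborel F = integral (cbox a b) F"
proof -
  have "compact (F ` cbox a b)" by (rule compact_continuous_image) (use c in \<open>auto intro: continuous_on_subset\<close>)
  then obtain B where B: "\<And>y. y \<in> F ` cbox a b \<Longrightarrow> norm y \<le> B" using compact_imp_bounded bounded_iff by metis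
  have Fm[measurable]: "F \<in> borel_measurable borel" using c by (rule borel_measurable_continuous_onI)
  have le: "norm (F t) \<le> norm (B * indicator (cbox a b) t)" for t
    using B[of "F t"] z[of t] by (cases "t \<in> cbox a b") (auto simp: indicator_def)
  have ii: "integrable lborel (\<lambda>t. B * indicator (cbox a b) t :: real)"
    by (intro integrable_mult_right integrable_real_indicator) (use emeasure_lborel_cbox_finite[of a b] in auto)
  show i: "integrable lborel F"
    by (rule Bochner_Integration.integrable_bound[OF ii]) (use le in auto)
  have "(F has_integral integral\<^sup>L lborel F) UNIV" by (rule has_integral_integral_lborel[OF i])
  moreover have "F = (\<lambda>x. if x \<in> cbox a b then F x else 0)" using z by auto
  ultimately have "((\<lambda>x. if x \<in> cbox a b then F x else 0) has_integral integral\<^sup>L lborel F) UNIV" by simp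
  hence "(F has_integral integral\<^sup>L lborel F) (cbox a b)" by (simp add: has_integral_restrict_UNIV)
  thus "integral\<^sup>L lborel F = integral (cbox a b) F" by (simp add: integral_unique)
qed

lemma Cc_inf_in_cbox:
  assumes "g \<in> Cc_inf"
  shows "\<exists>a b. \<forall>t. t \<notin> cbox a b \<longrightarrow> g t = 0"
proof -
  have "bounded (closure {x. g x \<noteq> 0})" using Cc_infD(2)[OF assms] compact_imp_bounded by blast
  then obtain a b where "closure {x. g x \<noteq> 0} \<subseteq> cbox a b" using bounded_subset_cbox_symmetric by metis
  thus ?thesis using closure_subset[of "{x. g x \<noteq> 0}"] by blast
qed

lemma corr_Cc_inf:
  fixes \<rho> g :: "'a::euclidean_space \<Rightarrow> real"
  assumes \<rho>: "\<rho> \<in> Cc_inf" and g: "g \<in> Cc_inf"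
  shows "corr \<rho> g \<in> Cc_inf"
proof -
  have smg: "smooth_fun g" using Cc_infD[OF g] by simp
  obtain a0 b0 where Q: "\<And>t. t \<notin> cbox a0 b0 \<Longrightarrow> \<rho> t = 0" using Cc_inf_in_cbox[OF \<rho>] by blast
  have c\<rho>: "continuous_on UNIV \<rho>" using Cc_infD[OF \<rho>] by simp
  define S where "S = {f. \<exists>a. a \<in> iter_derivs g \<and> f = corr \<rho> a}"
  have cl: "f differentiable_on UNIV \<and> (\<forall>v. (\<lambda>x. frechet_derivative f (at x) v) \<in> S)" if "f \<in> S" for f
  proof -
    obtain a where a: "a \<in> iter_derivs g" and f: "f = corr \<rho> a" using \<open>f \<in> S\<close> S_def by auto
    have ca: "continuous_on UNIV a" using iter_derivs_diff(2)[OF smg a] .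
    have da: "(a has_derivative frechet_derivative a (at x)) (at x)" for x using iter_derivs_diff(4)[OF smg a] .
    define D where "D = (\<lambda>v x. frechet_derivative a (at x) v)"
    have Dit: "D v \<in> iter_derivs g" for v unfolding D_def using iter_derivs_diff(3)[OF smg a] .
    have cD: "continuous_on UNIV (D v)" for v using iter_derivs_diff(2)[OF smg Dit] .
    have corr_eq: "corr \<rho> b x = integral (cbox a0 b0) (\<lambda>t. \<rho> t * b (x + t))" if "continuous_on UNIV b" for b x
    proof -
      have "continuous_on UNIV (\<lambda>t. \<rho> t * b (x + t))"
        by (intro continuous_intros c\<rho> continuous_on_compose2[OF that]) auto
      thus ?thesis unfolding corr_def by (rule lborel_integral_cbox(2)) (use Q in auto)
    qed
    define fx where "fx = (\<lambda>x t. Blinfun (\<lambda>v. \<rho> t * D v (x + t)))"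
    have bl: "bounded_linear (\<lambda>v. \<rho> t * D v (x + t))" for x t
    proof -
      have "bounded_linear (frechet_derivative a (at (x + t)))" using da[of "x + t"] has_derivative_bounded_linear by blast
      thus ?thesis unfolding D_def by (rule bounded_linear_compose[OF bounded_linear_mult_right])
    qed
    have fxa: "blinfun_apply (fx x t) v = \<rho> t * D v (x + t)" for x t v
      unfolding fx_def using bounded_linear_Blinfun_apply[OF bl] by simp
    have hd: "((\<lambda>x. \<rho> t * a (x + t)) has_derivative blinfun_apply (fx x t)) (at x within UNIV)" for x t
    proof -
      have eqf: "blinfun_apply (fx x t) = (\<lambda>v. \<rho> t * frechet_derivative a (at (x + t)) v)"
        by (rule ext) (simp add: fxa D_def)
      have "((\<lambda>x. x + t) has_derivative (\<lambda>v. v)) (at x)" by (auto intro!: derivative_eq_intros)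
      from has_derivative_compose[OF this da[of "x + t"]]
      have "((\<lambda>x. a (x + t)) has_derivative frechet_derivative a (at (x + t))) (at x)" by (simp add: o_def)
      from has_derivative_mult_right[OF this, of "\<rho> t"]
      show ?thesis using eqf by simp
    qed
    have cfx: "continuous_on (UNIV \<times> cbox a0 b0) (\<lambda>(x, t). fx x t)"
    proof (rule continuous_on_blinfun_componentwise)
      fix i :: 'a
      have "continuous_on (UNIV \<times> cbox a0 b0) (\<lambda>z. \<rho> (snd z) * D i (fst z + snd z))"
        by (intro continuous_on_mult continuous_on_compose2[OF c\<rho>] continuous_on_compose2[OF cD]
            continuous_intros) auto
      thus "continuous_on (UNIV \<times> cbox a0 b0) (\<lambda>x. blinfun_apply (case x of (x, t) \<Rightarrow> fx x t) i)"
        by (simp add: fxa case_prod_beta)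
    qed
    have intf: "(\<lambda>t. \<rho> t * a (x + t)) integrable_on cbox a0 b0" for x
      by (rule integrable_continuous) (intro continuous_intros continuous_on_compose2[OF c\<rho>]
          continuous_on_compose2[OF ca]; auto)
    have intfx: "fx x integrable_on cbox a0 b0" for x
    proof (rule integrable_continuous)
      have "continuous_on (cbox a0 b0) ((\<lambda>(x, t). fx x t) \<circ> (\<lambda>t. (x, t)))"
        by (rule continuous_on_compose[OF _ continuous_on_subset[OF cfx]]) (auto intro: continuous_intros)
      thus "continuous_on (cbox a0 b0) (fx x)" by (simp add: o_def)
    qed
    have fdef: "f = (\<lambda>x. integral (cbox a0 b0) (\<lambda>t. \<rho> t * a (x + t)))"
      using corr_eq[OF ca] by (auto simp: f fun_eq_iff)
    have der: "(f has_derivative blinfun_apply (integral (cbox a0 b0) (fx x0))) (at x0)" for x0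
      unfolding fdef using leibniz_rule[of UNIV a0 b0 "\<lambda>x t. \<rho> t * a (x + t)" fx x0, OF hd intf cfx] by simp
    have fd: "frechet_derivative f (at x) v = corr \<rho> (D v) x" for x v
    proof -
      have "frechet_derivative f (at x) v = blinfun_apply (integral (cbox a0 b0) (fx x)) v"
        using frechet_derivative_at[OF der[of x]] by simp
      also have "\<dots> = integral (cbox a0 b0) (\<lambda>t. \<rho> t * D v (x + t))"
        using blinfun_apply_integral[OF intfx] by (simp add: fxa)
      also have "\<dots> = corr \<rho> (D v) x" using corr_eq[OF cD] by simp
      finally show ?thesis .
    qed
    show ?thesis
    proof (intro conjI allI)
      show "f differentiable_on UNIV" using der by (auto simp: differentiable_on_def differentiable_def)
      fix v show "(\<lambda>x. frechet_derivative f (at x) v) \<in> S"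
        unfolding fd S_def using Dit by blast
    qed
  qed
  have sm: "smooth_fun (corr \<rho> g)"
  proof (rule smooth_funI_class[where S=S])
    show "corr \<rho> g \<in> S" unfolding S_def using iter_derivs.base by blast
  qed (use cl in auto)
  have "compact (closure {x. corr \<rho> g x \<noteq> 0})"
  proof -
    define Kg where "Kg = closure {x. g x \<noteq> 0}"
    define K\<rho> where "K\<rho> = closure {x. \<rho> x \<noteq> 0}"
    define K where "K = {x - y |x y. x \<in> Kg \<and> y \<in> K\<rho>}"
    have cK: "compact K" unfolding K_def
      by (rule compact_differences) (use Cc_infD(2)[OF g] Cc_infD(2)[OF \<rho>] in \<open>auto simp: Kg_def K\<rho>_def\<close>)
    have "{x. corr \<rho> g x \<noteq> 0} \<subseteq> K"
    proof
      fix x assume x: "x \<in> {x. corr \<rho> g x \<noteq> 0}"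
      have "\<exists>y. \<rho> y * g (x + y) \<noteq> 0"
      proof (rule ccontr)
        assume "\<not> ?thesis"
        hence "(\<lambda>y. \<rho> y * g (x + y)) = (\<lambda>y. 0)" by auto
        hence "corr \<rho> g x = 0" unfolding corr_def by simp
        thus False using x by simp
      qed
      then obtain y where y: "\<rho> y \<noteq> 0" "g (x + y) \<noteq> 0" by auto
      have "x + y \<in> Kg" "y \<in> K\<rho>" using y closure_subset[of "{x. g x \<noteq> 0}"] closure_subset[of "{x. \<rho> x \<noteq> 0}"]
        by (auto simp: Kg_def K\<rho>_def)
      moreover have "x = (x + y) - y" by simp
      ultimately show "x \<in> K" unfolding K_def by blast
    qed
    hence "closure {x. corr \<rho> g x \<noteq> 0} \<subseteq> K" using cK by (simp add: closure_minimal compact_imp_closed)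
    thus ?thesis using cK compact_closed_subset closed_closure by blast
  qed
  thus ?thesis using sm by (simp add: Cc_inf_def)
qed

lemma integral_pos_cont:
  fixes F :: "'a::euclidean_space \<Rightarrow> real"
  assumes c: "continuous_on UNIV F" and nn: "\<And>x. 0 \<le> F x" and i: "integrable lborel F" and z: "0 < F z"
  shows "0 < integral\<^sup>L lborel F"
proof -
  have "continuous (at z) F" using c by (simp add: continuous_on_eq_continuous_at)
  then obtain d where d: "d > 0" "\<And>y. dist y z < d \<Longrightarrow> dist (F y) (F z) < F z / 2"
    using z unfolding continuous_at_eps_delta by (meson half_gt_zero)
  have le: "F z / 2 * indicator (ball z d) y \<le> F y" for y
  proof (cases "y \<in> ball z d")
    case True
    hence "dist (F y) (F z) < F z / 2" using d by (simp add: dist_commute)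
    hence "F z / 2 \<le> F y" unfolding dist_real_def by linarith
    thus ?thesis using True by (simp add: indicator_def)
  next
    case False thus ?thesis using nn by simp
  qed
  have ii: "integrable lborel (\<lambda>y. F z / 2 * indicator (ball z d) y :: real)"
    by (intro integrable_mult_right integrable_real_indicator) (use emeasure_lborel_ball_finite[of z d] in auto)
  have "0 < F z / 2 * measure lborel (ball z d)" using z d content_ball_pos by auto
  also have "\<dots> = (\<integral>y. F z / 2 * indicator (ball z d) y \<partial>lborel)" by simp
  also have "\<dots> \<le> integral\<^sup>L lborel F" by (rule integral_mono[OF ii i le])
  finally show ?thesis .
qed

lemma mollifier_exists:
  fixes g0 :: "'a::euclidean_space \<Rightarrow> real"
  assumes g0: "g0 \<in> Cc_inf" and x0: "g0 x0 \<noteq> 0" and t: "0 < t"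
  shows "\<exists>\<rho>::'a \<Rightarrow> real\<in>Cc_inf. (\<forall>y. 0 \<le> \<rho> y) \<and> integral\<^sup>L lborel \<rho> = 1 \<and> (\<forall>y. \<rho> y \<noteq> 0 \<longrightarrow> norm y < t)"
proof -
  define \<psi> where "\<psi> = (\<lambda>x. g0 x * g0 x)"
  have \<psi>: "\<psi> \<in> Cc_inf" unfolding \<psi>_def using Cc_inf_square[OF g0] .
  obtain R where R: "R > 0" "\<And>x. norm x > R \<Longrightarrow> \<psi> x = 0" using Cc_inf_bounded_support[OF \<psi>] by blast
  define r where "r = 2 * R / t"
  have r: "0 < r" using R t by (simp add: r_def)
  define \<phi> where "\<phi> = (\<lambda>x. 1 * \<psi> (r *\<^sub>R x))"
  have \<phi>: "\<phi> \<in> Cc_inf" unfolding \<phi>_def by (rule Cc_inf_scale[OF \<psi>]) (use r in simp)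
  have c\<phi>: "continuous_on UNIV \<phi>" using Cc_infD[OF \<phi>] by simp
  have i\<phi>: "integrable lborel \<phi>" using Cc_inf_LP(2)[OF \<phi>, of 1] by simp
  have "r *\<^sub>R ((1/r) *\<^sub>R x0) = x0" using r by simp
  moreover have sq: "0 < g0 x0 * g0 x0" using x0 by (metis not_real_square_gt_zero)
  ultimately have pos: "0 < \<phi> ((1/r) *\<^sub>R x0)" unfolding \<phi>_def \<psi>_def by simp
  define I where "I = integral\<^sup>L lborel \<phi>"
  have I: "0 < I" unfolding I_def by (rule integral_pos_cont[OF c\<phi> _ i\<phi> pos]) (simp add: \<phi>_def \<psi>_def)
  define \<rho> where "\<rho> = (\<lambda>x. (1/I) * \<psi> (r *\<^sub>R x))"
  have A1: "\<rho> \<in> Cc_inf" unfolding \<rho>_def by (rule Cc_inf_scale[OF \<psi>]) (use r in simp)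
  have A2: "\<forall>y. 0 \<le> \<rho> y" using I by (simp add: \<rho>_def \<psi>_def)
  have A3: "integral\<^sup>L lborel \<rho> = 1"
  proof -
    have "\<rho> = (\<lambda>x. (1/I) * \<phi> x)" by (simp add: \<rho>_def \<phi>_def)
    thus ?thesis using I by (simp add: I_def)
  qed
  have A4: "\<forall>y. \<rho> y \<noteq> 0 \<longrightarrow> norm y < t"
  proof (intro allI impI)
    fix y assume "\<rho> y \<noteq> 0"
    hence "\<psi> (r *\<^sub>R y) \<noteq> 0" by (simp add: \<rho>_def)
    hence "norm (r *\<^sub>R y) \<le> R" using R(2)[of "r *\<^sub>R y"] by linarith
    hence "r * norm y \<le> R" using r by simp
    hence "norm y \<le> R / r" using r by (simp add: field_simps)
    also have "R / r = t / 2" using R t by (simp add: r_def field_simps)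
    finally show "norm y < t" using t by simp
  qed
  show ?thesis
  proof (rule bexI[OF _ A1])
    show "(\<forall>y. 0 \<le> \<rho> y) \<and> integral\<^sup>L lborel \<rho> = 1 \<and> (\<forall>y. \<rho> y \<noteq> 0 \<longrightarrow> norm y < t)"
      using A2 A3 A4 by (intro conjI)
  qed
qed

lemma powr_neg_mult_le:
  fixes h :: "'a::real_normed_vector"
  assumes "h \<noteq> 0" "X \<le> e * norm h powr s"
  shows "norm h powr (-s) * X \<le> e"
proof -
  have pos: "0 < norm h powr s" using assms(1) by simp
  have "norm h powr (-s) * X \<le> norm h powr (-s) * (e * norm h powr s)"
    using assms(2) by (intro mult_left_mono) auto
  also have "\<dots> = e" using pos by (simp add: powr_minus field_simps)
  finally show ?thesis .
qed

lemma core: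
  fixes F :: "'a::euclidean_space \<Rightarrow> real"
  assumes p: "1 \<le> p" and s: "0 < s" "s < 1"
    and Fm[measurable]: "F \<in> borel_measurable borel" and FL: "LP p F"
    and Bc: "0 \<le> Bc" "\<And>h. NP p (\<lambda>x. F (x + h) - F x) \<le> Bc * norm h powr s"
    and little: "\<And>e. 0 < e \<Longrightarrow> \<exists>\<delta>>0. \<forall>h. h \<noteq> 0 \<and> norm h < \<delta> \<longrightarrow>
        norm h powr (-s) * NP p (\<lambda>x. F (x + h) - F x) \<le> e"
    and approx: "\<And>\<eta>. 0 < \<eta> \<Longrightarrow> \<exists>g\<in>Cc_inf. NP p (\<lambda>x. F x - g x) < \<eta>"
    and \<epsilon>: "0 < \<epsilon>"
  shows "\<exists>g'\<in>Cc_inf. NP p (\<lambda>x. F x - g' x) \<le> \<epsilon> \<and>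
     (\<forall>h. h \<noteq> 0 \<longrightarrow> norm h powr (-s) * NP p (\<lambda>x. (F (x + h) - g' (x + h)) - (F x - g' x)) \<le> \<epsilon>)"
proof (cases "NP p F = 0")
  case True
  have "NP p (\<lambda>x. F (x + h) - F x) \<le> 0" for h using NP_Dl_le(2)[OF p Fm FL, of h] True by simp
  hence "NP p (\<lambda>x. F (x + h) - F x) = 0" for h using NP_nonneg[of p] by (meson order.antisym)
  hence "NP p (\<lambda>x. (F (x + h) - 0) - (F x - 0)) = 0" for h by simp
  moreover have "NP p (\<lambda>x. F x - 0) = 0" using True by simp
  ultimately show ?thesis using \<epsilon> Cc_inf_zero by (intro bexI[of _ "\<lambda>x. 0"]) auto
next
  case False
  have NPF: "0 < NP p F" using False NP_nonneg[of p F] by simp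
  obtain g0 where g0: "g0 \<in> Cc_inf" "NP p (\<lambda>x. F x - g0 x) < NP p F / 2"
    using approx[of "NP p F / 2"] NPF by auto
  obtain x0 where x0: "g0 x0 \<noteq> 0"
  proof (rule ccontr)
    assume "\<not> thesis"
    hence "\<forall>x. g0 x = 0" using that by blast
    hence "NP p (\<lambda>x. F x - g0 x) = NP p F" by simp
    thus False using g0(2) NPF by simp
  qed
  define e1 where "e1 = \<epsilon> / 4"
  have e1: "0 < e1" using \<epsilon> by (simp add: e1_def)
  obtain \<delta>0 where \<delta>0: "\<delta>0 > 0" "\<And>h. h \<noteq> 0 \<Longrightarrow> norm h < \<delta>0 \<Longrightarrow>
        norm h powr (-s) * NP p (\<lambda>x. F (x + h) - F x) \<le> e1"
    using little[OF e1] by blast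
  define \<delta> where "\<delta> = min \<delta>0 1"
  have \<delta>: "0 < \<delta>" "\<delta> \<le> 1" "\<delta> \<le> \<delta>0" using \<delta>0 by (auto simp: \<delta>_def)
  define m where "m = e1 * \<delta> powr s / 2"
  have m: "0 < m" using e1 \<delta> by (simp add: m_def)
  have m_le: "m \<le> e1 / 2"
  proof -
    have "\<delta> powr s \<le> 1 powr s" using \<delta> s by (intro powr_mono2) auto
    thus ?thesis using e1 by (simp add: m_def)
  qed
  define t where "t = min 1 ((m / (Bc + 1)) powr (1 / s))"
  have t: "0 < t" "t \<le> 1" using m Bc(1) by (auto simp: t_def)
  have Bt: "Bc * t powr s \<le> m"
  proof -
    have "t powr s \<le> ((m / (Bc + 1)) powr (1 / s)) powr s"
      using t s by (intro powr_mono2) (auto simp: t_def)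
    also have "\<dots> = m / (Bc + 1)" using s m Bc(1) by (simp add: powr_powr)
    finally have "t powr s \<le> m / (Bc + 1)" .
    hence "Bc * t powr s \<le> Bc * (m / (Bc + 1))" using Bc(1) by (intro mult_left_mono)
    also have "\<dots> \<le> m" using Bc(1) m by (simp add: field_simps)
    finally show ?thesis .
  qed
  obtain \<rho> :: "'a \<Rightarrow> real" where \<rho>: "\<rho> \<in> Cc_inf" "\<And>y. 0 \<le> \<rho> y" "integral\<^sup>L lborel \<rho> = 1"
    "\<And>y. \<rho> y \<noteq> 0 \<Longrightarrow> norm y < t"
    using mollifier_exists[OF g0(1) x0 t(1)] by blast
  have \<rho>m[measurable]: "\<rho> \<in> borel_measurable borel" using Cc_infD[OF \<rho>(1)] by simp
  have \<rho>i: "integrable lborel \<rho>" using Cc_inf_LP(2)[OF \<rho>(1), of 1] by simp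
  obtain Rb where Rb: "\<And>y. \<bar>\<rho> y\<bar> \<le> Rb" using iter_derivs_bounded[OF \<rho>(1) iter_derivs.base] by blast
  have \<rho>1: "(\<integral>y. \<bar>\<rho> y\<bar> \<partial>lborel) = 1" using \<rho>(2,3) by simp
  obtain C where C: "0 \<le> C" "\<And>h. norm h \<le> 1 \<Longrightarrow> (\<integral>x. \<bar>\<rho> (x + h) - \<rho> x\<bar> \<partial>lborel) \<le> C * norm h"
    using Cc_inf_diff_bound[OF \<rho>(1) p] by blast
  define \<eta> where "\<eta> = e1 / (C + 2)"
  have \<eta>: "0 < \<eta>" "(C + 2) * \<eta> = e1" using e1 C(1) by (auto simp: \<eta>_def)
  have C\<eta>: "0 \<le> C * \<eta>" using C(1) \<eta>(1) by simp
  have \<eta>2: "2 * \<eta> \<le> e1" "C * \<eta> \<le> e1" using \<eta> C\<eta> by (auto simp: algebra_simps)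
  obtain g where g: "g \<in> Cc_inf" "NP p (\<lambda>x. F x - g x) < \<eta>" using approx[OF \<eta>(1)] by blast
  have gm[measurable]: "g \<in> borel_measurable borel" using Cc_infD[OF g(1)] by simp
  have gL: "LP p g" using Cc_inf_LP(1)[OF g(1)] p by simp
  define u where "u = (\<lambda>x. F x - g x)"
  have um[measurable]: "u \<in> borel_measurable borel" unfolding u_def by measurable
  have uL: "LP p u" unfolding u_def using NP_diff(1)[OF p Fm gm FL gL] .
  define g' where "g' = corr \<rho> g"
  have g': "g' \<in> Cc_inf" unfolding g'_def by (rule corr_Cc_inf[OF \<rho>(1) g(1)])
  define A where "A = (\<lambda>x. F x - corr \<rho> F x)"
  have Am[measurable]: "A \<in> borel_measurable borel" unfolding A_def by measurable
  have Ab: "LP p A" "NP p A \<le> Bc * t powr s"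
  proof -
    have "\<And>y. \<rho> y \<noteq> 0 \<Longrightarrow> NP p (\<lambda>x. F (x + y) - F x) \<le> Bc * t powr s"
    proof -
      fix y assume "\<rho> y \<noteq> 0"
      hence "norm y < t" using \<rho>(4) by simp
      hence "Bc * norm y powr s \<le> Bc * t powr s" using Bc(1) s by (intro mult_left_mono powr_mono2) auto
      thus "NP p (\<lambda>x. F (x + y) - F x) \<le> Bc * t powr s" using Bc(2)[of y] by linarith
    qed
    from corr_approx_bound[OF p \<rho>m Fm Rb \<rho>i FL \<rho>(3) _ this] Bc(1) t(1) \<rho>1
    show "LP p A" "NP p A \<le> Bc * t powr s" by (auto simp: A_def)
  qed
  define B where "B = corr \<rho> u"
  have Bm[measurable]: "B \<in> borel_measurable borel" unfolding B_def by measurable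
  have Bb: "LP p B" "NP p B \<le> NP p u" using corr_bound[OF p \<rho>m um \<rho>i uL] \<rho>1 by (auto simp: B_def)
  have eq: "F x - g' x = A x + B x" for x
    using corr_diff[OF p \<rho>m Fm gm Rb \<rho>i FL gL, of x] by (simp add: A_def B_def u_def g'_def)
  have NPu: "NP p u < \<eta>" using g(2) by (simp add: u_def)
  have part1: "NP p (\<lambda>x. F x - g' x) \<le> \<epsilon>"
  proof -
    have "NP p (\<lambda>x. F x - g' x) = NP p (\<lambda>x. A x + B x)" using eq by simp
    also have "\<dots> \<le> NP p A + NP p B" using NP_add(2)[OF p Am Bm Ab(1) Bb(1)] .
    also have "\<dots> \<le> m + \<eta>" using Ab(2) Bt Bb(2) NPu by linarith
    also have "\<dots> \<le> \<epsilon>"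
    proof -
      have "2 * \<eta> \<le> e1" by (rule \<eta>2)
      thus ?thesis using m_le e1 by (simp add: e1_def)
    qed
    finally show ?thesis .
  qed
  have part2: "norm h powr (-s) * NP p (\<lambda>x. (F (x + h) - g' (x + h)) - (F x - g' x)) \<le> \<epsilon>"
    if h: "h \<noteq> 0" for h
  proof -
    define dA where "dA = (\<lambda>x. A (x + h) - A x)"
    define dB where "dB = (\<lambda>x. B (x + h) - B x)"
    have dAm[measurable]: "dA \<in> borel_measurable borel" unfolding dA_def by measurable
    have dBm[measurable]: "dB \<in> borel_measurable borel" unfolding dB_def by measurable
    have dAL: "LP p dA" "NP p dA \<le> 2 * NP p A" using NP_Dl_le[OF p Am Ab(1)] by (auto simp: dA_def)
    have dBL: "LP p dB" "NP p dB \<le> 2 * NP p B" using NP_Dl_le[OF p Bm Bb(1)] by (auto simp: dB_def)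
    have hs: "0 < norm h powr s" using h by simp
    have b1: "norm h powr (-s) * NP p dA \<le> 2 * e1"
    proof (cases "norm h < \<delta>")
      case True
      define dF where "dF = (\<lambda>z. F (z + h) - F z)"
      have dFm[measurable]: "dF \<in> borel_measurable borel" unfolding dF_def by measurable
      have dFL: "LP p dF" using NP_Dl_le(1)[OF p Fm FL] by (simp add: dF_def)
      have "dA x = dF x - corr \<rho> dF x" for x
        using corr_shift_comm[OF p \<rho>m Fm Rb \<rho>i FL, of x h] by (simp add: dA_def A_def dF_def)
      hence "dA = (\<lambda>x. dF x - corr \<rho> dF x)" by (intro ext)
      hence "NP p dA = NP p (\<lambda>x. dF x - corr \<rho> dF x)" by simp
      also have "\<dots> \<le> NP p dF + NP p (corr \<rho> dF)"
        by (rule NP_diff(2)[OF p dFm _ dFL corr_bound(1)[OF p \<rho>m dFm \<rho>i dFL]]) measurable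
      also have "NP p (corr \<rho> dF) \<le> NP p dF" using corr_bound(2)[OF p \<rho>m dFm \<rho>i dFL] \<rho>1 by simp
      finally have "NP p dA \<le> 2 * NP p dF" by simp
      hence "norm h powr (-s) * NP p dA \<le> norm h powr (-s) * (2 * NP p dF)"
        by (intro mult_left_mono) auto
      also have "\<dots> = 2 * (norm h powr (-s) * NP p dF)" by simp
      also have "\<dots> \<le> 2 * e1" using \<delta>0(2)[OF h] True \<delta>(3) by (simp add: dF_def)
      finally show ?thesis .
    next
      case False
      have "NP p dA \<le> 2 * m" using dAL(2) Ab(2) Bt by linarith
      also have "2 * m = e1 * \<delta> powr s" by (simp add: m_def)
      also have "\<dots> \<le> e1 * norm h powr s" using False \<delta> s e1 by (intro mult_left_mono powr_mono2) auto
      finally have "norm h powr (-s) * NP p dA \<le> e1" by (rule powr_neg_mult_le[OF h])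
      thus ?thesis using e1 by simp
    qed
    have b2: "norm h powr (-s) * NP p dB \<le> e1"
    proof (cases "norm h \<le> 1")
      case True
      define c where "c = (\<lambda>y. \<rho> (y - h) - \<rho> y)"
      have cm[measurable]: "c \<in> borel_measurable borel" unfolding c_def by measurable
      have ci: "integrable lborel c"
      proof -
        have "integrable lborel (\<lambda>y. \<rho> (y + (- h)))" using lborel_integrable_shift[of \<rho> "- h"] \<rho>i by simp
        thus ?thesis unfolding c_def using \<rho>i by simp
      qed
      have "dB x = corr c u x" for x
        using corr_shift_diff[OF p \<rho>m um Rb \<rho>i uL, of x h] by (simp add: dB_def B_def c_def)
      hence "dB = corr c u" by (intro ext)
      hence "NP p dB = NP p (corr c u)" by simp
      also have "\<dots> \<le> (\<integral>y. \<bar>c y\<bar> \<partial>lborel) * NP p u" using corr_bound(2)[OF p cm um ci uL] .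
      also have "(\<integral>y. \<bar>c y\<bar> \<partial>lborel) \<le> C * norm h"
        using C(2)[of "- h"] True by (simp add: c_def)
      hence "(\<integral>y. \<bar>c y\<bar> \<partial>lborel) * NP p u \<le> C * norm h * \<eta>"
        using NPu NP_nonneg[of p u] C(1) by (intro mult_mono) auto
      finally have dBb: "NP p dB \<le> C * norm h * \<eta>" .
      have "C * norm h * \<eta> = (C * \<eta>) * (norm h powr (1 - s)) * norm h powr s"
        using h by (simp add: powr_diff field_simps)
      also have "\<dots> \<le> (C * \<eta>) * 1 * norm h powr s"
      proof -
        have "norm h powr (1 - s) \<le> 1" using powr_mono2[of "1 - s" "norm h" 1] True s by simp
        thus ?thesis using C(1) \<eta>(1) hs by (intro mult_right_mono mult_left_mono) auto
      qed
      also have "C * \<eta> \<le> e1" by (rule \<eta>2)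
      hence "(C * \<eta>) * 1 * norm h powr s \<le> e1 * norm h powr s" using hs by (intro mult_right_mono) auto
      finally show ?thesis by (rule powr_neg_mult_le[OF h, OF order.trans[OF dBb]])
    next
      case False
      have "NP p dB \<le> 2 * \<eta>" using dBL(2) Bb(2) NPu by linarith
      also have "2 * \<eta> \<le> e1" by (rule \<eta>2)
      also have "e1 \<le> e1 * norm h powr s"
      proof -
        have "1 \<le> norm h powr s" using False s by (simp add: ge_one_powr_ge_zero)
        thus ?thesis using e1 by simp
      qed
      finally show ?thesis by (rule powr_neg_mult_le[OF h])
    qed
    have "(\<lambda>x. (F (x + h) - g' (x + h)) - (F x - g' x)) = (\<lambda>x. dA x + dB x)"
      using eq by (simp add: fun_eq_iff dA_def dB_def)
    hence "NP p (\<lambda>x. (F (x + h) - g' (x + h)) - (F x - g' x)) \<le> NP p dA + NP p dB"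
      using NP_add(2)[OF p dAm dBm dAL(1) dBL(1)] by simp
    hence "norm h powr (-s) * NP p (\<lambda>x. (F (x + h) - g' (x + h)) - (F x - g' x))
        \<le> norm h powr (-s) * NP p dA + norm h powr (-s) * NP p dB"
      by (simp add: distrib_left[symmetric] mult_left_mono)
    also have "\<dots> \<le> 3 * e1" using b1 b2 by simp
    also have "\<dots> \<le> \<epsilon>" using \<epsilon> by (simp add: e1_def)
    finally show ?thesis .
  qed
  show ?thesis using g' part1 part2 by blast
qed

lemma AE_borel_measurable_completion:
  fixes f g :: "'b \<Rightarrow> real"
  assumes g: "g \<in> borel_measurable M" and ae: "AE x in M. f x = g x"
  shows "f \<in> borel_measurable (completion M)"
proof -
  obtain N where N: "{x \<in> space M. \<not> f x = g x} \<subseteq> N" "N \<in> null_sets M" using ae by (auto elim!: AE_E)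
  show ?thesis
  proof (rule measurableI)
    show "x \<in> space (completion M) \<Longrightarrow> f x \<in> space borel" for x by simp
    fix A :: "real set" assume A: "A \<in> sets borel"
    have eq: "f -` A \<inter> space (completion M) = ((g -` A \<inter> space M) - N) \<union> (f -` A \<inter> space M \<inter> N)"
      using N(1) by auto
    have "(g -` A \<inter> space M) - N \<in> sets M" using g A N(2) by (auto intro: measurable_sets)
    hence 1: "(g -` A \<inter> space M) - N \<in> sets (completion M)" by (rule sets_completionI_sets)
    have "f -` A \<inter> space M \<inter> N \<in> null_sets (completion M)"
      by (rule null_sets_completion_subset[of _ N]) (use N(2) null_sets_completionI in auto)
    hence 2: "f -` A \<inter> space M \<inter> N \<in> sets (completion M)" by auto
    show "f -` A \<inter> space (completion M) \<in> sets (completion M)" unfolding eq using 1 2 by auto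
  qed
qed

lemma Lp_norm_AE:
  fixes u v :: "'a::euclidean_space \<Rightarrow> real"
  assumes v[measurable]: "v \<in> borel_measurable borel" and ae: "AE x in lborel. u x = v x"
  shows "Lp_norm p u = NP p v" "in_Lp p u \<longleftrightarrow> LP p v"
proof -
  have vl: "v \<in> borel_measurable lborel" by simp
  have um[measurable]: "u \<in> borel_measurable lebesgue" by (rule AE_borel_measurable_completion[OF vl ae])
  have ae2: "AE x in lebesgue. \<bar>u x\<bar> powr p = \<bar>v x\<bar> powr p"
    using ae by (simp add: AE_completion_iff) (auto elim: eventually_mono)
  have vm2: "(\<lambda>x. \<bar>v x\<bar> powr p) \<in> borel_measurable lebesgue"
    by (rule measurable_completion) simp
  have "(LINT x|lebesgue. \<bar>u x\<bar> powr p) = (LINT x|lebesgue. \<bar>v x\<bar> powr p)"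
    by (rule integral_cong_AE) (use ae2 vm2 in auto)
  also have "\<dots> = (LINT x|lborel. \<bar>v x\<bar> powr p)" by (rule integral_completion) simp
  finally show "Lp_norm p u = NP p v" by (simp add: Lp_norm_def NP_def)
  have "integrable lebesgue (\<lambda>x. \<bar>u x\<bar> powr p) \<longleftrightarrow> integrable lebesgue (\<lambda>x. \<bar>v x\<bar> powr p)"
    by (rule integrable_cong_AE) (use ae2 vm2 in auto)
  also have "\<dots> \<longleftrightarrow> integrable lborel (\<lambda>x. \<bar>v x\<bar> powr p)" by (rule integrable_completion) simp
  finally show "in_Lp p u \<longleftrightarrow> LP p v" using um by (simp add: in_Lp_def LP_def)
qed

lemma AE_shift:
  fixes f F :: "'a::euclidean_space \<Rightarrow> real"
  assumes ae: "AE x in lborel. f x = F x"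
  shows "AE x in lborel. f (x + h) = F (x + h)"
proof -
  from ae obtain N where N0: "{x \<in> space lborel. \<not> f x = F x} \<subseteq> N" "emeasure lborel N = 0" "N \<in> sets lborel"
    by (rule AE_E)
  have N: "{x \<in> space lborel. \<not> f x = F x} \<subseteq> N" "N \<in> null_sets lborel" using N0 by (auto intro: null_setsI)
  have "{x. x - (- h) \<in> N} \<in> null_sets lborel" by (rule null_sets_translation[OF N(2)])
  moreover have "{x \<in> space lborel. \<not> f (x + h) = F (x + h)} \<subseteq> {x. x - (- h) \<in> N}" using N(1) by auto
  ultimately show ?thesis by (rule AE_I')
qed

lemma transfer_diff:
  fixes f F g :: "'a::euclidean_space \<Rightarrow> real"
  assumes ae: "AE x in lborel. f x = F x" and [measurable]: "F \<in> borel_measurable borel" "g \<in> borel_measurable borel"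
  shows "Lp_norm p (\<lambda>x. f x - g x) = NP p (\<lambda>x. F x - g x)"
    "Lp_norm p (\<lambda>x. (f (x + h) - g (x + h)) - (f x - g x)) = NP p (\<lambda>x. (F (x + h) - g (x + h)) - (F x - g x))"
proof -
  show "Lp_norm p (\<lambda>x. f x - g x) = NP p (\<lambda>x. F x - g x)"
    by (rule Lp_norm_AE(1)) (use ae in \<open>auto elim: eventually_mono\<close>)
  have "AE x in lborel. f (x + h) = F (x + h)" by (rule AE_shift[OF ae])
  with ae have "AE x in lborel. (f (x + h) - g (x + h)) - (f x - g x) = (F (x + h) - g (x + h)) - (F x - g x)"
    by eventually_elim simp
  thus "Lp_norm p (\<lambda>x. (f (x + h) - g (x + h)) - (f x - g x)) = NP p (\<lambda>x. (F (x + h) - g (x + h)) - (F x - g x))"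
    by (intro Lp_norm_AE(1)) auto
qed

lemma nik_le_besov: "nikolskii_semi s p u \<le> besov_semi s p (u :: 'a::euclidean_space \<Rightarrow> real)"
  unfolding nikolskii_semi_def besov_semi_def
proof (rule Limsup_bounded)
  show "\<forall>\<^sub>F h in at 0. ereal (norm h powr - s * Lp_norm p (\<lambda>x. u (x + h) - u x))
      \<le> (SUP h\<in>- {0}. ereal (norm h powr - s * Lp_norm p (\<lambda>x. u (x + h) - u x)))"
    unfolding eventually_at by (intro exI[of _ 1]) (auto intro: SUP_upper)
qed

lemma nik_nonneg: "0 \<le> nikolskii_semi s p (u :: 'a::euclidean_space \<Rightarrow> real)"
  unfolding nikolskii_semi_def
  by (rule le_Limsup) (auto simp: Lp_norm_def intro!: always_eventually)

lemma Lp_norm_nonneg: "0 \<le> Lp_norm p u" by (simp add: Lp_norm_def)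

lemma dir1:
  fixes f :: "'a::euclidean_space \<Rightarrow> real"
  assumes "f \<in> besov_zero s p"
  shows "f \<in> nikolskii_zero s p"
proof -
  have "nikolskii_norm s p u \<le> besov_norm s p u" for u :: "'a \<Rightarrow> real"
    unfolding nikolskii_norm_def besov_norm_def by (intro add_left_mono nik_le_besov)
  have "\<exists>g\<in>Cc_inf. nikolskii_norm s p (\<lambda>x. f x - g x) < ereal \<epsilon>" if "0 < \<epsilon>" for \<epsilon>
  proof -
    obtain g where "g \<in> Cc_inf" "besov_norm s p (\<lambda>x. f x - g x) < ereal \<epsilon>"
      using assms \<open>0 < \<epsilon>\<close> unfolding besov_zero_def by blast
    thus ?thesis using \<open>\<And>u. nikolskii_norm s p u \<le> besov_norm s p u\<close> by (blast intro: le_less_trans)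
  qed
  thus ?thesis using assms unfolding besov_zero_def nikolskii_zero_def by blast
qed

lemma ereal_le_fin:
  assumes "ereal X \<le> B" "B < \<infinity>"
  shows "X \<le> real_of_ereal B"
  using assms by (cases B) auto

lemma dir2:
  fixes f :: "'a::euclidean_space \<Rightarrow> real"
  assumes p: "1 \<le> p" and s: "0 < s" "s < 1" and fN: "f \<in> nikolskii_zero s p"
  shows "f \<in> besov_zero s p"
proof -
  have fB: "f \<in> besov_space s p" and hyp: "\<And>\<epsilon>. 0 < \<epsilon> \<Longrightarrow> \<exists>g\<in>Cc_inf. nikolskii_norm s p (\<lambda>x. f x - g x) < ereal \<epsilon>"
    using fN by (auto simp: nikolskii_zero_def)
  have fin: "in_Lp p f" "besov_semi s p f < \<infinity>" using fB by (auto simp: besov_space_def)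
  have "f \<in> borel_measurable (completion lborel)" using fin(1) by (simp add: in_Lp_def)
  then obtain F where Fl: "F \<in> borel_measurable lborel" and ae: "AE x in lborel. f x = F x"
    using completion_ex_borel_measurable_real by blast
  have Fm[measurable]: "F \<in> borel_measurable borel" using Fl by simp
  have FL: "LP p F" using Lp_norm_AE(2)[OF Fm ae] fin(1) by simp
  have TF: "Lp_norm p (\<lambda>x. f (x + h) - f x) = NP p (\<lambda>x. F (x + h) - F x)" for h
    using transfer_diff(2)[OF ae Fm, of "\<lambda>x. 0" p h] by simp
  define B where "B = besov_semi s p f"
  define Bc where "Bc = max 0 (real_of_ereal B)"
  have Bc0: "0 \<le> Bc" by (simp add: Bc_def)
  have Bcb: "NP p (\<lambda>x. F (x + h) - F x) \<le> Bc * norm h powr s" for h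
  proof (cases "h = 0")
    case True
    have "NP p (\<lambda>x. F (x + h) - F x) = 0" using True NP_zero_fun(1)[of p] p by simp
    thus ?thesis using True by simp
  next
    case False
    have "ereal (norm h powr - s * Lp_norm p (\<lambda>x. f (x + h) - f x)) \<le> B"
      unfolding B_def besov_semi_def using False by (intro SUP_upper) auto
    hence "norm h powr - s * NP p (\<lambda>x. F (x + h) - F x) \<le> real_of_ereal B"
      using fin(2) by (intro ereal_le_fin) (auto simp: TF B_def)
    hence le: "norm h powr - s * NP p (\<lambda>x. F (x + h) - F x) \<le> Bc" by (simp add: Bc_def)
    have pos: "0 < norm h powr s" using False by simp
    have "NP p (\<lambda>x. F (x + h) - F x) = norm h powr s * (norm h powr - s * NP p (\<lambda>x. F (x + h) - F x))"
      using pos by (simp add: powr_minus field_simps)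
    also have "\<dots> \<le> norm h powr s * Bc" using le pos by (intro mult_left_mono) auto
    finally show ?thesis by (simp add: mult.commute)
  qed
  have Cc_lp: "Lp_norm p (\<lambda>x. f x - g x) = NP p (\<lambda>x. F x - g x)"
    "Lp_norm p (\<lambda>x. (f (x + h) - g (x + h)) - (f x - g x)) = NP p (\<lambda>x. (F (x + h) - g (x + h)) - (F x - g x))"
    if "g \<in> Cc_inf" for g h
    using transfer_diff[OF ae Fm Cc_infD(4)[OF that]] by auto
  have approx: "\<exists>g\<in>Cc_inf. NP p (\<lambda>x. F x - g x) < \<eta>" if \<eta>0: "0 < \<eta>" for \<eta>
  proof -
    obtain g where g: "g \<in> Cc_inf" "nikolskii_norm s p (\<lambda>x. f x - g x) < ereal \<eta>" using hyp[OF \<eta>0] by blast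
    have "ereal (Lp_norm p (\<lambda>x. f x - g x)) \<le> nikolskii_norm s p (\<lambda>x. f x - g x)"
      unfolding nikolskii_norm_def using nik_nonneg by (intro add_increasing2) auto
    hence "ereal (Lp_norm p (\<lambda>x. f x - g x)) < ereal \<eta>" using g(2) by (rule le_less_trans)
    hence "Lp_norm p (\<lambda>x. f x - g x) < \<eta>" by simp
    thus ?thesis using g(1) Cc_lp(1)[OF g(1)] by auto
  qed
  have little: "\<exists>\<delta>>0. \<forall>h. h \<noteq> 0 \<and> norm h < \<delta> \<longrightarrow> norm h powr (-s) * NP p (\<lambda>x. F (x + h) - F x) \<le> e"
    if e: "0 < e" for e
  proof -
    obtain g where g: "g \<in> Cc_inf" "nikolskii_norm s p (\<lambda>x. f x - g x) < ereal (e / 2)"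
      using hyp[of "e/2"] e by auto
    have gm[measurable]: "g \<in> borel_measurable borel" using Cc_infD(4)[OF g(1)] .
    have gL: "LP p g" using Cc_inf_LP(1)[OF g(1)] p by simp
    have "nikolskii_semi s p (\<lambda>x. f x - g x) \<le> nikolskii_norm s p (\<lambda>x. f x - g x)"
      unfolding nikolskii_norm_def by (intro add_increasing) (auto simp: Lp_norm_nonneg)
    hence "nikolskii_semi s p (\<lambda>x. f x - g x) < ereal (e / 2)" using g(2) by simp
    hence "\<forall>\<^sub>F h in at 0. ereal (norm h powr - s * Lp_norm p (\<lambda>x. (f (x + h) - g (x + h)) - (f x - g x))) < ereal (e / 2)"
      unfolding nikolskii_semi_def by (rule Limsup_lessD)
    hence "\<exists>d>0. \<forall>h\<in>UNIV. h \<noteq> 0 \<and> dist h 0 < d \<longrightarrow>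
        ereal (norm h powr - s * Lp_norm p (\<lambda>x. (f (x + h) - g (x + h)) - (f x - g x))) < ereal (e / 2)"
      by (rule eventually_at[THEN iffD1])
    then obtain d where d0: "d > 0" and dP: "\<forall>h\<in>UNIV. h \<noteq> 0 \<and> dist h 0 < d \<longrightarrow>
        ereal (norm h powr - s * Lp_norm p (\<lambda>x. (f (x + h) - g (x + h)) - (f x - g x))) < ereal (e / 2)"
      by (elim exE conjE)
    have d: "d > 0" "\<And>h. h \<noteq> 0 \<Longrightarrow> dist h 0 < d \<Longrightarrow>
        norm h powr - s * NP p (\<lambda>x. (F (x + h) - g (x + h)) - (F x - g x)) < e / 2"
    proof -
      show "d > 0" by (rule d0)
      fix h :: 'a assume "h \<noteq> 0" "dist h 0 < d"
      hence "ereal (norm h powr - s * Lp_norm p (\<lambda>x. (f (x + h) - g (x + h)) - (f x - g x))) < ereal (e / 2)"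
      proof -
        have hh: "h \<noteq> 0 \<and> dist h 0 < d" using \<open>h \<noteq> 0\<close> \<open>dist h 0 < d\<close> by (rule conjI)
        show ?thesis by (rule mp[OF bspec[OF dP UNIV_I] hh])
      qed
      thus "norm h powr - s * NP p (\<lambda>x. (F (x + h) - g (x + h)) - (F x - g x)) < e / 2"
        using Cc_lp(2)[OF g(1), of h] by simp
    qed
    obtain C where C: "0 \<le> C" "\<And>h. norm h \<le> 1 \<Longrightarrow> NP p (\<lambda>x. g (x + h) - g x) \<le> C * norm h"
      using Cc_inf_diff_bound[OF g(1) p] by blast
    define \<delta>2 where "\<delta>2 = min 1 ((e / (2 * (C + 1))) powr (1 / (1 - s)))"
    have \<delta>2: "0 < \<delta>2" "\<delta>2 \<le> 1" using e C(1) by (auto simp: \<delta>2_def)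
    have \<delta>2b: "\<delta>2 powr (1 - s) \<le> e / (2 * (C + 1))"
    proof -
      have "\<delta>2 powr (1 - s) \<le> ((e / (2 * (C + 1))) powr (1 / (1 - s))) powr (1 - s)"
        using \<delta>2 s by (intro powr_mono2) (auto simp: \<delta>2_def)
      also have "\<dots> = e / (2 * (C + 1))" using s e C(1) by (simp add: powr_powr)
      finally show ?thesis .
    qed
    define \<delta> where "\<delta> = min d \<delta>2"
    have "norm h powr (-s) * NP p (\<lambda>x. F (x + h) - F x) \<le> e" if h: "h \<noteq> 0" "norm h < \<delta>" for h
    proof -
      have hd: "norm h < d" "norm h < \<delta>2" using h by (auto simp: \<delta>_def)
      define u where "u = (\<lambda>x. F x - g x)"
      have um[measurable]: "u \<in> borel_measurable borel" unfolding u_def by measurable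
      have uL: "LP p u" unfolding u_def by (rule NP_diff(1)[OF p Fm gm FL gL])
      have eqF: "(\<lambda>x. F (x + h) - F x) = (\<lambda>x. (u (x + h) - u x) + (g (x + h) - g x))"
        by (simp add: u_def fun_eq_iff)
      have m1: "(\<lambda>x. u (x + h) - u x) \<in> borel_measurable borel" by measurable
      have m2: "(\<lambda>x. g (x + h) - g x) \<in> borel_measurable borel" by measurable
      have "NP p (\<lambda>x. (u (x + h) - u x) + (g (x + h) - g x)) \<le> NP p (\<lambda>x. u (x + h) - u x) + NP p (\<lambda>x. g (x + h) - g x)"
        by (rule NP_add(2)[OF p m1 m2 NP_Dl_le(1)[OF p um uL] NP_Dl_le(1)[OF p gm gL]])
      hence "NP p (\<lambda>x. F (x + h) - F x) \<le> NP p (\<lambda>x. u (x + h) - u x) + NP p (\<lambda>x. g (x + h) - g x)"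
        by (simp only: eqF)
      hence "norm h powr (-s) * NP p (\<lambda>x. F (x + h) - F x) \<le>
          norm h powr (-s) * NP p (\<lambda>x. u (x + h) - u x) + norm h powr (-s) * NP p (\<lambda>x. g (x + h) - g x)"
        by (simp add: distrib_left[symmetric] mult_left_mono)
      also have "norm h powr (-s) * NP p (\<lambda>x. u (x + h) - u x) < e / 2"
        using d(2)[OF h(1)] hd by (simp add: u_def)
      also have "norm h powr (-s) * NP p (\<lambda>x. g (x + h) - g x) \<le> e / 2"
      proof -
        have "norm h powr (-s) * NP p (\<lambda>x. g (x + h) - g x) \<le> norm h powr (-s) * (C * norm h)"
          using C(2)[of h] hd \<delta>2 by (intro mult_left_mono) auto
        also have "\<dots> = C * norm h powr (1 - s)" using h(1) by (simp add: powr_diff powr_minus field_simps)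
        also have "\<dots> \<le> C * (e / (2 * (C + 1)))"
        proof -
          have "norm h powr (1 - s) \<le> \<delta>2 powr (1 - s)" using hd s by (intro powr_mono2) auto
          thus ?thesis using \<delta>2b C(1) by (intro mult_left_mono) auto
        qed
        also have "\<dots> \<le> e / 2" using C(1) e by (simp add: field_simps)
        finally show ?thesis .
      qed
      finally show ?thesis by simp
    qed
    moreover have "0 < \<delta>" using d \<delta>2 by (simp add: \<delta>_def)
    ultimately show ?thesis by blast
  qed
  have "\<exists>g\<in>Cc_inf. besov_norm s p (\<lambda>x. f x - g x) < ereal \<epsilon>" if \<epsilon>: "0 < \<epsilon>" for \<epsilon>
  proof -
    have e3: "0 < \<epsilon> / 3" using \<epsilon> by simp
    obtain g' where g'0: "g' \<in> Cc_inf" "NP p (\<lambda>x. F x - g' x) \<le> \<epsilon> / 3"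
      "\<forall>h. h \<noteq> 0 \<longrightarrow> norm h powr (-s) * NP p (\<lambda>x. (F (x + h) - g' (x + h)) - (F x - g' x)) \<le> \<epsilon> / 3"
    proof -
      have "\<exists>g'\<in>Cc_inf. NP p (\<lambda>x. F x - g' x) \<le> \<epsilon> / 3 \<and>
          (\<forall>h. h \<noteq> 0 \<longrightarrow> norm h powr (-s) * NP p (\<lambda>x. (F (x + h) - g' (x + h)) - (F x - g' x)) \<le> \<epsilon> / 3)"
      proof (rule core[OF p s Fm FL Bc0 Bcb _ _ e3])
        show "\<exists>\<delta>>0. \<forall>h. h \<noteq> 0 \<and> norm h < \<delta> \<longrightarrow> norm h powr (-s) * NP p (\<lambda>x. F (x + h) - F x) \<le> e"
          if "0 < e" for e using little[OF that] .
        show "\<exists>g\<in>Cc_inf. NP p (\<lambda>x. F x - g x) < \<eta>" if "0 < \<eta>" for \<eta> using approx[OF that] .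
      qed
      thus ?thesis using that by (elim bexE conjE)
    qed
    have g': "g' \<in> Cc_inf" "NP p (\<lambda>x. F x - g' x) \<le> \<epsilon> / 3"
      "\<And>h. h \<noteq> 0 \<Longrightarrow> norm h powr (-s) * NP p (\<lambda>x. (F (x + h) - g' (x + h)) - (F x - g' x)) \<le> \<epsilon> / 3"
      using g'0 by auto
    have "besov_semi s p (\<lambda>x. f x - g' x) \<le> ereal (\<epsilon> / 3)"
      unfolding besov_semi_def
    proof (rule SUP_least)
      fix h :: 'a assume "h \<in> - {0}"
      hence "h \<noteq> 0" by simp
      thus "ereal (norm h powr - s * Lp_norm p (\<lambda>x. (f (x + h) - g' (x + h)) - (f x - g' x))) \<le> ereal (\<epsilon> / 3)"
        using g'(3) Cc_lp(2)[OF g'(1)] by simp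
    qed
    moreover have "ereal (Lp_norm p (\<lambda>x. f x - g' x)) \<le> ereal (\<epsilon> / 3)"
      using g'(2) Cc_lp(1)[OF g'(1)] by simp
    ultimately have "besov_norm s p (\<lambda>x. f x - g' x) \<le> ereal (\<epsilon> / 3) + ereal (\<epsilon> / 3)"
      unfolding besov_norm_def by (intro add_mono) auto
    also have "\<dots> < ereal \<epsilon>" using \<epsilon> by simp
    finally show ?thesis using g'(1) by blast
  qed
  thus ?thesis using fB by (simp add: besov_zero_def)
qed

theorem proposition5p6:
  fixes s p :: real and f :: "'a::euclidean_space \<Rightarrow> real"
  assumes "0 < s" "s < 1" "1 \<le> p"
  shows "f \<in> (nikolskii_zero s p :: ('a \<Rightarrow> real) set) \<longleftrightarrow> f \<in> besov_zero s p"
  using dir1[of f s p] dir2[OF assms(3) assms(1) assms(2), of f] by blast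

end
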